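(* Let $\mathbb{X}$ be a topological space with viable base $\Omega_0$, and $\mathbb{D}$ a bc-domain with basis $D_0$. Let $\mathcal{W}$ be the rounded ideal completion of $(\mathbb{B}_{\mathrm{abs}},\prec)$. Then $\mathcal{W}$ is order-isomorphic to $[\widehat{\mathbb{X}}_{\Omega_0}\to\mathbb{D}]$.
   Context: A viable base of $\mathbb{X}=(X,\tau_{\mathbb{X}})$ is a family $\Omega_0\subseteq\tau_{\mathbb{X}}$ closed under finite unions and finite intersections (so $\emptyset,X\in\Omega_0$) which is a base of $\tau_{\mathbb{X}}$. $\mathrm{Idl}(\Omega_0)$ is the complete lattice (under inclusion) of ideals (nonempty, downward closed, directed subsets) of $(\Omega_0,\subseteq)$. $\widehat{\mathbb{X}}_{\Omega_0}$ is the set of completely prime filters of $\mathrm{Idl}(\Omega_0)$ (nonempty upward closed sets closed under binary meets such that $\bigvee A\in F\Rightarrow A\cap F\neq\emptyset$), with the topology whose open sets are exactly $\mathcal{O}_I=\{y: I\in y\}$, $I\in\mathrm{Idl}(\Omega_0)$. A bc-domain is a continuous dcpo with least element $\bot$ in which bounded subsets have joins; $\ll$ is way-below; $\twoheaduparrow b=\{d: b\ll d\}$; a basis $D_0$ is a subset such that each $x$ is the directed join of $\{a\in D_0: a\ll x\}$. $[\widehat{\mathbb{X}}_{\Omega_0}\to\mathbb{D}]$ is the set of functions continuous into the Scott topology of $D$, ordered pointwise. $b\chi_O$ has value $b$ on $O$ and $\bot$ elsewhere; a family $\{b_i\chi_{O_i}\}_{i\in I}$ is consistent if for every $J\subseteq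 I$ with $\bigcap_{j\in J}O_j\neq\emptyset$ the $b_j$ ($j\in J$) have an upper bound. $\mathbb{B}_{\mathrm{abs}}$ is the set of functions $X\to D$ of the form $\bigsqcup_{i\in I}b_i\chi_{O_i}$ (pointwise join) with $I$ finite, the family consistent, $O_i\in\Omega_0$, $b_i\in D_0$; on it, $\bigsqcup_{i\in I}b_i\chi_{O_i}\prec h$ iff $O_i\subseteq h^{-1}(\twoheaduparrow b_i)$ for all $i\in I$. The rounded ideal completion of $(\mathbb{B}_{\mathrm{abs}},\prec)$ is the set of nonempty subsets $R\subseteq\mathbb{B}_{\mathrm{abs}}$ that are $\prec$-downward closed ($h\in R$, $h'\prec h\Rightarrow h'\in R$) and $\prec$-directed (for $h_1,h_2\in R$ there is $h\in R$ with $h_1\prec h$, $h_2\prec h$), ordered by inclusion. *)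

theory Defs
  imports "HOL-Analysis.Abstract_Topology" "HOL-Library.FuncSet"
begin

definition is_lub_in :: "'c set \<Rightarrow> ('c \<Rightarrow> 'c \<Rightarrow> bool) \<Rightarrow> 'c set \<Rightarrow> 'c \<Rightarrow> bool" where
  "is_lub_in C le A z \<longleftrightarrow> z \<in> C \<and> (\<forall>a\<in>A. le a z) \<and> (\<forall>w\<in>C. (\<forall>a\<in>A. le a w) \<longrightarrow> le z w)"

definition is_glb_in :: "'c set \<Rightarrow> ('c \<Rightarrow> 'c \<Rightarrow> bool) \<Rightarrow> 'c set \<Rightarrow> 'c \<Rightarrow> bool" where
  "is_glb_in C le A z \<longleftrightarrow> z \<in> C \<and> (\<forall>a\<in>A. le z a) \<and> (\<forall>w\<in>C. (\<forall>a\<in>A. le w a) \<longrightarrow> le w z)"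

definition is_lub :: "'b::order set \<Rightarrow> 'b \<Rightarrow> bool" where
  "is_lub S z \<longleftrightarrow> is_lub_in UNIV (\<le>) S z"

definition lub :: "'b::order set \<Rightarrow> 'b" where
  "lub S = (THE z. is_lub S z)"

definition directed :: "'b::order set \<Rightarrow> bool" where
  "directed S \<longleftrightarrow> S \<noteq> {} \<and> (\<forall>x\<in>S. \<forall>y\<in>S. \<exists>z\<in>S. x \<le> z \<and> y \<le> z)"

definition is_dcpo :: "'b::order itself \<Rightarrow> bool" where
  "is_dcpo _ \<longleftrightarrow> (\<forall>S::'b set. directed S \<longrightarrow> (\<exists>z. is_lub S z))"

definition way_below :: "'b::order \<Rightarrow> 'b \<Rightarrow> bool" (infix "\<lless>" 50) where
  "x \<lless> y \<longleftrightarrow> (\<forall>S z. directed S \<longrightarrow> is_lub S z \<longrightarrow> y \<le> z \<longrightarrow> (\<exists>s\<in>S. x \<le> s))"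

definition bc_domain :: "'b::order itself \<Rightarrow> bool" where
  "bc_domain T \<longleftrightarrow> is_dcpo T
     \<and> (\<exists>bot::'b. \<forall>x. bot \<le> x)
     \<and> (\<forall>x::'b. directed {a. a \<lless> x} \<and> is_lub {a. a \<lless> x} x)
     \<and> (\<forall>S::'b set. (\<exists>u. \<forall>s\<in>S. s \<le> u) \<longrightarrow> (\<exists>z. is_lub S z))"

definition is_basis :: "'b::order set \<Rightarrow> bool" where
  "is_basis D0 \<longleftrightarrow> (\<forall>x. directed {a\<in>D0. a \<lless> x} \<and> is_lub {a\<in>D0. a \<lless> x} x)"

definition scott_open :: "'b::order set \<Rightarrow> bool" where
  "scott_open U \<longleftrightarrow> (\<forall>x\<in>U. \<forall>y. x \<le> y \<longrightarrow> y \<in> U)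
     \<and> (\<forall>S z. directed S \<longrightarrow> is_lub S z \<longrightarrow> z \<in> U \<longrightarrow> S \<inter> U \<noteq> {})"

definition viable_base :: "'a topology \<Rightarrow> 'a set set \<Rightarrow> bool" where
  "viable_base T \<Omega>0 \<longleftrightarrow> (\<forall>U\<in>\<Omega>0. openin T U)
     \<and> {} \<in> \<Omega>0 \<and> topspace T \<in> \<Omega>0
     \<and> (\<forall>U\<in>\<Omega>0. \<forall>V\<in>\<Omega>0. U \<union> V \<in> \<Omega>0 \<and> U \<inter> V \<in> \<Omega>0)
     \<and> (\<forall>U. openin T U \<longrightarrow> (\<exists>S\<subseteq>\<Omega>0. \<Union>S = U))"

definition Idl :: "'a set set \<Rightarrow> 'a set set set" where
  "Idl \<Omega>0 = {I. I \<subseteq> \<Omega>0 \<and> I \<noteq> {}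
      \<and> (\<forall>a\<in>I. \<forall>b\<in>\<Omega>0. b \<subseteq> a \<longrightarrow> b \<in> I)
      \<and> (\<forall>a\<in>I. \<forall>b\<in>I. \<exists>c\<in>I. a \<subseteq> c \<and> b \<subseteq> c)}"

definition completely_prime_filter :: "'a set set \<Rightarrow> 'a set set set \<Rightarrow> bool" where
  "completely_prime_filter \<Omega>0 F \<longleftrightarrow> F \<subseteq> Idl \<Omega>0 \<and> F \<noteq> {}
     \<and> (\<forall>I\<in>F. \<forall>J\<in>Idl \<Omega>0. I \<subseteq> J \<longrightarrow> J \<in> F)
     \<and> (\<forall>I\<in>F. \<forall>J\<in>F. \<forall>M. is_glb_in (Idl \<Omega>0) (\<subseteq>) {I, J} M \<longrightarrow> M \<in> F)
     \<and> (\<forall>A\<subseteq>Idl \<Omega>0. \<forall>J. is_lub_in (Idl \<Omega>0) (\<subseteq>) A J \<longrightarrow> J \<in> F \<longrightarrow> A \<inter> F \<noteq> {})"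

definition Xhat :: "'a set set \<Rightarrow> 'a set set set set" where
  "Xhat \<Omega>0 = {F. completely_prime_filter \<Omega>0 F}"

definition OI :: "'a set set \<Rightarrow> 'a set set \<Rightarrow> 'a set set set set" where
  "OI \<Omega>0 I = {y \<in> Xhat \<Omega>0. I \<in> y}"

text \<open>The function space [Xhat -> D]: Scott-continuous functions on Xhat
  (extensional, i.e. undefined outside Xhat), ordered pointwise on Xhat.\<close>
definition cont_fun_space :: "'a set set \<Rightarrow> ('a set set set \<Rightarrow> 'b::order) set" where
  "cont_fun_space \<Omega>0 = {f. f \<in> extensional (Xhat \<Omega>0)
      \<and> (\<forall>U. scott_open U \<longrightarrow> (\<exists>I\<in>Idl \<Omega>0. {y \<in> Xhat \<Omega>0. f y \<in> U} = OI \<Omega>0 I))}"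

definition fun_le :: "'c set \<Rightarrow> ('c \<Rightarrow> 'b::order) \<Rightarrow> ('c \<Rightarrow> 'b) \<Rightarrow> bool" where
  "fun_le A f g \<longleftrightarrow> (\<forall>y\<in>A. f y \<le> g y)"

text \<open>Pointwise join of the family b_i chi_{O_i} (i in I) on X (undefined outside X).\<close>
definition step_join :: "'a set \<Rightarrow> nat set \<Rightarrow> (nat \<Rightarrow> 'b::order) \<Rightarrow> (nat \<Rightarrow> 'a set) \<Rightarrow> 'a \<Rightarrow> 'b" where
  "step_join X I b Ob = (\<lambda>x. if x \<in> X then lub {b i | i. i \<in> I \<and> x \<in> Ob i} else undefined)"

definition consistent_family :: "nat set \<Rightarrow> (nat \<Rightarrow> 'b::order) \<Rightarrow> (nat \<Rightarrow> 'a set) \<Rightarrow> bool" where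
  "consistent_family I b Ob \<longleftrightarrow>
     (\<forall>J\<subseteq>I. (\<Inter>j\<in>J. Ob j) \<noteq> {} \<longrightarrow> (\<exists>u. \<forall>j\<in>J. b j \<le> u))"

definition is_rep :: "'a topology \<Rightarrow> 'a set set \<Rightarrow> 'b::order set
    \<Rightarrow> nat set \<Rightarrow> (nat \<Rightarrow> 'b) \<Rightarrow> (nat \<Rightarrow> 'a set) \<Rightarrow> ('a \<Rightarrow> 'b) \<Rightarrow> bool" where
  "is_rep T \<Omega>0 D0 I b Ob h \<longleftrightarrow> finite I \<and> consistent_family I b Ob
     \<and> (\<forall>i\<in>I. Ob i \<in> \<Omega>0 \<and> b i \<in> D0) \<and> h = step_join (topspace T) I b Ob"

definition Babs :: "'a topology \<Rightarrow> 'a set set \<Rightarrow> 'b::order set \<Rightarrow> ('a \<Rightarrow> 'b) set" where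
  "Babs T \<Omega>0 D0 = {h. \<exists>I b Ob. is_rep T \<Omega>0 D0 I b Ob h}"

definition prec :: "'a topology \<Rightarrow> 'a set set \<Rightarrow> 'b::order set \<Rightarrow> ('a \<Rightarrow> 'b) \<Rightarrow> ('a \<Rightarrow> 'b) \<Rightarrow> bool" where
  "prec T \<Omega>0 D0 h' h \<longleftrightarrow> (\<exists>I b Ob. is_rep T \<Omega>0 D0 I b Ob h'
      \<and> (\<forall>i\<in>I. Ob i \<subseteq> {x \<in> topspace T. b i \<lless> h x}))"

definition rounded_ideal_completion :: "'a topology \<Rightarrow> 'a set set \<Rightarrow> 'b::order set \<Rightarrow> ('a \<Rightarrow> 'b) set set" where
  "rounded_ideal_completion T \<Omega>0 D0 = {R. R \<subseteq> Babs T \<Omega>0 D0 \<and> R \<noteq> {}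
      \<and> (\<forall>h\<in>R. \<forall>h'\<in>Babs T \<Omega>0 D0. prec T \<Omega>0 D0 h' h \<longrightarrow> h' \<in> R)
      \<and> (\<forall>h1\<in>R. \<forall>h2\<in>R. \<exists>h\<in>R. prec T \<Omega>0 D0 h1 h \<and> prec T \<Omega>0 D0 h2 h)}"

end

theory Submission
  imports Defs
begin


lemma is_lub_iff: "is_lub S z \<longleftrightarrow> (\<forall>s\<in>S. s \<le> z) \<and> (\<forall>u. (\<forall>s\<in>S. s \<le> u) \<longrightarrow> z \<le> u)"
  by (auto simp: is_lub_def is_lub_in_def)

lemma is_lub_upper: "is_lub S z \<Longrightarrow> s \<in> S \<Longrightarrow> s \<le> z"
  by (auto simp: is_lub_iff)

lemma is_lub_least: "is_lub S z \<Longrightarrow> (\<And>s. s \<in> S \<Longrightarrow> s \<le> u) \<Longrightarrow> z \<le> u"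
  by (auto simp: is_lub_iff)

lemma is_lub_unique: "is_lub S a \<Longrightarrow> is_lub S b \<Longrightarrow> a = b"
  by (meson antisym is_lub_iff)

lemma lub_eq: "is_lub S z \<Longrightarrow> lub S = z"
  unfolding lub_def by (rule the_equality) (auto intro: is_lub_unique)

lemma is_lub_single: "is_lub {a} a"
  by (auto simp: is_lub_iff)

lemma directed_single: "directed {a}"
  by (auto simp: directed_def)

lemma wb_le: "a \<lless> b \<Longrightarrow> a \<le> b"
  unfolding way_below_def using directed_single is_lub_single by fastforce

lemma wb_mono: "a' \<le> a \<Longrightarrow> a \<lless> b \<Longrightarrow> b \<le> b' \<Longrightarrow> a' \<lless> b'"
  unfolding way_below_def by (meson order_trans)

lemma wb_dir: "a \<lless> z \<Longrightarrow> directed S \<Longrightarrow> is_lub S z \<Longrightarrow> \<exists>s\<in>S. a \<le> s"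
  unfolding way_below_def by blast

lemma lub_mono: "is_lub S a \<Longrightarrow> is_lub S' b \<Longrightarrow> S \<subseteq> S' \<Longrightarrow> a \<le> b"
  by (meson is_lub_iff subsetD)

locale dom =
  fixes D0 :: "'b::order set"
  assumes bc: "bc_domain TYPE('b)" and basis: "is_basis D0"
begin

lemma bcD1: "is_dcpo TYPE('b)"
  using bc[unfolded bc_domain_def] by (rule conjunct1)

lemma bcD3: "\<forall>S::'b set. (\<exists>u. \<forall>s\<in>S. s \<le> u) \<longrightarrow> (\<exists>z. is_lub S z)"
  using bc[unfolded bc_domain_def] by (elim conjE)

lemma dcpo: "directed (S::'b set) \<Longrightarrow> \<exists>z. is_lub S z"
  using bcD1 unfolding is_dcpo_def by blast

lemma bounded: "(\<And>s. s \<in> S \<Longrightarrow> s \<le> (u::'b)) \<Longrightarrow> \<exists>z. is_lub S z"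
  using bcD3 by blast

lemma basis_dir: "directed {a\<in>D0. a \<lless> x}" and basis_lub: "is_lub {a\<in>D0. a \<lless> x} x"
  using basis unfolding is_basis_def by auto

lemma interp: assumes "a \<lless> z" shows "\<exists>c\<in>D0. a \<lless> c \<and> c \<lless> z"
proof -
  define M where "M = {c\<in>D0. \<exists>d\<in>D0. c \<lless> d \<and> d \<lless> z}"
  have dirM: "directed M"
    unfolding directed_def
  proof (intro conjI ballI)
    obtain d where d: "d \<in> D0" "d \<lless> z" using basis_dir[of z] unfolding directed_def by blast
    obtain c where "c \<in> D0" "c \<lless> d" using basis_dir[of d] unfolding directed_def by blast
    then show "M \<noteq> {}" using d unfolding M_def by blast
  next
    fix x y assume "x \<in> M" "y \<in> M"
    then obtain d1 d2 where x: "x \<in> D0" "d1 \<in> D0" "x \<lless> d1" "d1 \<lless> z"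
      and y: "y \<in> D0" "d2 \<in> D0" "y \<lless> d2" "d2 \<lless> z" unfolding M_def by blast
    obtain d3 where d3: "d3 \<in> D0" "d3 \<lless> z" "d1 \<le> d3" "d2 \<le> d3"
      using basis_dir[of z] x y unfolding directed_def by blast
    have "x \<lless> d3" "y \<lless> d3" using x y d3 wb_mono by blast+
    then obtain c where "c \<in> D0" "c \<lless> d3" "x \<le> c" "y \<le> c"
      using basis_dir[of d3] x y unfolding directed_def by blast
    then show "\<exists>c\<in>M. x \<le> c \<and> y \<le> c" using d3 unfolding M_def by blast
  qed
  have lubM: "is_lub M z"
    unfolding is_lub_iff
  proof (intro conjI allI impI ballI)
    fix s assume "s \<in> M"
    then obtain d where "s \<lless> d" "d \<lless> z" unfolding M_def by blast
    then show "s \<le> z" using wb_le order_trans by blast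
  next
    fix u assume ub: "\<forall>s\<in>M. s \<le> u"
    have "d \<le> u" if "d \<in> D0" "d \<lless> z" for d
      using is_lub_least[OF basis_lub[of d]] ub that unfolding M_def by blast
    then show "z \<le> u" using is_lub_least[OF basis_lub[of z]] by blast
  qed
  obtain c where "c \<in> M" "a \<le> c" using wb_dir[OF assms dirM lubM] by blast
  then show ?thesis unfolding M_def using wb_mono by blast
qed

lemma scott_wb: "scott_open {z. (a::'b) \<lless> z}"
proof -
  have 1: "\<forall>x\<in>{z. a \<lless> z}. \<forall>y. x \<le> y \<longrightarrow> y \<in> {z. a \<lless> z}"
    using wb_mono[OF order_refl] by blast
  have 2: "S \<inter> {z. a \<lless> z} \<noteq> {}" if asm: "directed S" "is_lub S z" "a \<lless> z" for S z
  proof -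
    obtain c where "a \<lless> c" "c \<lless> z" using interp[OF asm(3)] by blast
    then obtain s where "s \<in> S" "c \<le> s" using wb_dir[OF \<open>c \<lless> z\<close> asm(1) asm(2)] by blast
    then show ?thesis using \<open>a \<lless> c\<close> wb_mono[of a a c s] by auto
  qed
  show ?thesis unfolding scott_open_def using 1 2 by auto
qed

end


locale setting = dom D0 for D0 :: "'b::order set" +
  fixes T :: "'a topology" and Om :: "'a set set"
  assumes vb: "viable_base T Om"
begin

abbreviation "X \<equiv> topspace T"

lemma vbD: "\<forall>U\<in>Om. openin T U" "{} \<in> Om" "X \<in> Om"
  "\<forall>U\<in>Om. \<forall>V\<in>Om. U \<union> V \<in> Om \<and> U \<inter> V \<in> Om"
  using vb unfolding viable_base_def by simp_all

lemma Om_sub: "U \<in> Om \<Longrightarrow> U \<subseteq> X"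
  using vbD(1) openin_subset by blast
lemma Om_empty: "{} \<in> Om" by (rule vbD(2))
lemma Om_X: "X \<in> Om" by (rule vbD(3))
lemma Om_Un: "U \<in> Om \<Longrightarrow> V \<in> Om \<Longrightarrow> U \<union> V \<in> Om" using vbD(4) by blast
lemma Om_Int: "U \<in> Om \<Longrightarrow> V \<in> Om \<Longrightarrow> U \<inter> V \<in> Om" using vbD(4) by blast

lemma Om_Union: "finite K \<Longrightarrow> K \<subseteq> Om \<Longrightarrow> \<Union>K \<in> Om"
  by (induction K rule: finite_induct) (auto intro: Om_Un Om_empty)

lemma Om_Inter: "finite K \<Longrightarrow> K \<subseteq> Om \<Longrightarrow> X \<inter> \<Inter>K \<in> Om"
proof (induction K rule: finite_induct)
  case empty then show ?case using Om_X by simp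
next
  case (insert a K)
  have "X \<inter> \<Inter>(insert a K) = a \<inter> (X \<inter> \<Inter>K)" using Om_sub[of a] insert by auto
  then show ?case using insert Om_Int by auto
qed

definition down :: "'a set \<Rightarrow> 'a set set" where "down W = {U\<in>Om. U \<subseteq> W}"

definition pf :: "'a set set set \<Rightarrow> 'a set set" where "pf F = {W\<in>Om. down W \<in> F}"

definition primef :: "'a set set \<Rightarrow> bool" where
  "primef P \<longleftrightarrow> P \<subseteq> Om \<and> X \<in> P \<and> {} \<notin> P \<and> (\<forall>U\<in>P. \<forall>V\<in>Om. U \<subseteq> V \<longrightarrow> V \<in> P)
     \<and> (\<forall>U\<in>P. \<forall>V\<in>P. U \<inter> V \<in> P) \<and> (\<forall>U\<in>Om. \<forall>V\<in>Om. U \<union> V \<in> P \<longrightarrow> U \<in> P \<or> V \<in> P)"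

lemma IdlD:
  assumes "I \<in> Idl Om"
  shows "I \<subseteq> Om" "I \<noteq> {}" "\<And>a b. a \<in> I \<Longrightarrow> b \<in> Om \<Longrightarrow> b \<subseteq> a \<Longrightarrow> b \<in> I"
    "\<And>a b. a \<in> I \<Longrightarrow> b \<in> I \<Longrightarrow> \<exists>c\<in>I. a \<subseteq> c \<and> b \<subseteq> c"
  using assms unfolding Idl_def by simp_all

lemma IdlI:
  assumes "I \<subseteq> Om" "I \<noteq> {}" "\<And>a b. a \<in> I \<Longrightarrow> b \<in> Om \<Longrightarrow> b \<subseteq> a \<Longrightarrow> b \<in> I"
    "\<And>a b. a \<in> I \<Longrightarrow> b \<in> I \<Longrightarrow> \<exists>c\<in>I. a \<subseteq> c \<and> b \<subseteq> c"
  shows "I \<in> Idl Om"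
  using assms unfolding Idl_def by simp

lemma Idl_empty: "I \<in> Idl Om \<Longrightarrow> {} \<in> I"
  using IdlD[of I] Om_empty by blast

lemma Idl_Un: "I \<in> Idl Om \<Longrightarrow> a \<in> I \<Longrightarrow> b \<in> I \<Longrightarrow> a \<union> b \<in> I"
proof -
  assume I: "I \<in> Idl Om" "a \<in> I" "b \<in> I"
  then obtain c where c: "c \<in> I" "a \<subseteq> c" "b \<subseteq> c" using IdlD(4)[OF I(1)] by blast
  moreover have "a \<union> b \<in> Om" using I Om_Un IdlD(1)[OF I(1)] by blast
  ultimately show ?thesis using IdlD(3)[OF I(1) c(1)] by blast
qed

lemma down_Idl: "W \<in> Om \<Longrightarrow> down W \<in> Idl Om"
  by (rule IdlI) (auto simp: down_def intro: Om_empty Om_Un)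

lemma Om_Idl: "Om \<in> Idl Om"
  by (rule IdlI) (auto intro: Om_empty Om_Un)

lemma down_X: "down X = Om"
  unfolding down_def using Om_sub by blast

lemma cpfD:
  assumes "completely_prime_filter Om F"
  shows "F \<subseteq> Idl Om" "F \<noteq> {}" "\<And>I J. I \<in> F \<Longrightarrow> J \<in> Idl Om \<Longrightarrow> I \<subseteq> J \<Longrightarrow> J \<in> F"
    "\<And>I J M. I \<in> F \<Longrightarrow> J \<in> F \<Longrightarrow> is_glb_in (Idl Om) (\<subseteq>) {I, J} M \<Longrightarrow> M \<in> F"
    "\<And>A J. A \<subseteq> Idl Om \<Longrightarrow> is_lub_in (Idl Om) (\<subseteq>) A J \<Longrightarrow> J \<in> F \<Longrightarrow> A \<inter> F \<noteq> {}"
proof -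
  note c = assms[unfolded completely_prime_filter_def]
  note c2 = conjunct2[OF c] note c3 = conjunct2[OF c2] note c4 = conjunct2[OF c3]
  show "F \<subseteq> Idl Om" by (rule conjunct1[OF c])
  show "F \<noteq> {}" by (rule conjunct1[OF c2])
  show "\<And>I J. I \<in> F \<Longrightarrow> J \<in> Idl Om \<Longrightarrow> I \<subseteq> J \<Longrightarrow> J \<in> F" using conjunct1[OF c3] by blast
  show "\<And>I J M. I \<in> F \<Longrightarrow> J \<in> F \<Longrightarrow> is_glb_in (Idl Om) (\<subseteq>) {I, J} M \<Longrightarrow> M \<in> F"
    using conjunct1[OF c4] by blast
  show "\<And>A J. A \<subseteq> Idl Om \<Longrightarrow> is_lub_in (Idl Om) (\<subseteq>) A J \<Longrightarrow> J \<in> F \<Longrightarrow> A \<inter> F \<noteq> {}"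
    using conjunct2[OF c4] by blast
qed

lemma pf_primef: assumes F: "F \<in> Xhat Om" shows "primef (pf F)"
proof -
  have cp: "completely_prime_filter Om F" using F unfolding Xhat_def by simp
  note cpD = cpfD[OF cp]
  have FI: "F \<subseteq> Idl Om" by (rule cpD(1))
  have up: "\<And>I J. I \<in> F \<Longrightarrow> J \<in> Idl Om \<Longrightarrow> I \<subseteq> J \<Longrightarrow> J \<in> F" by (rule cpD(3))
  have glb: "\<And>I J M. I \<in> F \<Longrightarrow> J \<in> F \<Longrightarrow> is_glb_in (Idl Om) (\<subseteq>) {I, J} M \<Longrightarrow> M \<in> F" by (rule cpD(4))
  have cpr: "\<And>A J. A \<subseteq> Idl Om \<Longrightarrow> is_lub_in (Idl Om) (\<subseteq>) A J \<Longrightarrow> J \<in> F \<Longrightarrow> A \<inter> F \<noteq> {}" by (rule cpD(5))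
  have ne: "F \<noteq> {}" by (rule cpD(2))
  have f1: "X \<in> pf F"
  proof -
    obtain I where "I \<in> F" using ne by blast
    then have "I \<subseteq> down X" using FI down_X IdlD(1) by blast
    then show ?thesis using up[OF \<open>I \<in> F\<close> down_Idl[OF Om_X]] Om_X unfolding pf_def by blast
  qed
  have f2: "{} \<notin> pf F"
  proof
    assume "{} \<in> pf F"
    then have "down {} \<in> F" unfolding pf_def by simp
    moreover have "is_lub_in (Idl Om) (\<subseteq>) {} (down {})"
    proof -
      have "down {} = {{}}" unfolding down_def using Om_empty by auto
      then show ?thesis unfolding is_lub_in_def using down_Idl[OF Om_empty] Idl_empty by auto
    qed
    ultimately show False using cpr[of "{}"] by blast
  qed
  have f3: "\<forall>U\<in>pf F. \<forall>V\<in>Om. U \<subseteq> V \<longrightarrow> V \<in> pf F"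
  proof (intro ballI impI)
    fix U V assume "U \<in> pf F" "V \<in> Om" "U \<subseteq> V"
    then have "down U \<subseteq> down V" "down U \<in> F" unfolding down_def pf_def by auto
    then show "V \<in> pf F" using up down_Idl[OF \<open>V \<in> Om\<close>] \<open>V \<in> Om\<close> unfolding pf_def by blast
  qed
  have f4: "\<forall>U\<in>pf F. \<forall>V\<in>pf F. U \<inter> V \<in> pf F"
  proof (intro ballI)
    fix U V assume UV: "U \<in> pf F" "V \<in> pf F"
    then have Om2: "U \<in> Om" "V \<in> Om" unfolding pf_def by auto
    have "is_glb_in (Idl Om) (\<subseteq>) {down U, down V} (down (U \<inter> V))"
      unfolding is_glb_in_def
    proof (intro conjI ballI impI)
      show "down (U \<inter> V) \<in> Idl Om" by (rule down_Idl[OF Om_Int[OF Om2]])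
    next
      fix a assume "a \<in> {down U, down V}" then show "down (U \<inter> V) \<subseteq> a" unfolding down_def by auto
    next
      fix w assume "w \<in> Idl Om" "\<forall>a\<in>{down U, down V}. w \<subseteq> a"
      then have "w \<subseteq> down U" "w \<subseteq> down V" by auto
      then show "w \<subseteq> down (U \<inter> V)" unfolding down_def by auto
    qed
    moreover have "down U \<in> F" "down V \<in> F" using UV unfolding pf_def by auto
    ultimately have "down (U \<inter> V) \<in> F" using glb by blast
    then show "U \<inter> V \<in> pf F" using Om_Int[OF Om2] unfolding pf_def by simp
  qed
  have f5: "\<forall>U\<in>Om. \<forall>V\<in>Om. U \<union> V \<in> pf F \<longrightarrow> U \<in> pf F \<or> V \<in> pf F"
  proof (intro ballI impI)
    fix U V assume UV: "U \<in> Om" "V \<in> Om" "U \<union> V \<in> pf F"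
    have "is_lub_in (Idl Om) (\<subseteq>) {down U, down V} (down (U \<union> V))"
      unfolding is_lub_in_def
    proof (intro conjI ballI impI)
      show "down (U \<union> V) \<in> Idl Om" using down_Idl Om_Un UV by blast
      show "\<And>a. a \<in> {down U, down V} \<Longrightarrow> a \<subseteq> down (U \<union> V)" unfolding down_def by auto
      fix w assume w: "w \<in> Idl Om" "\<forall>a\<in>{down U, down V}. a \<subseteq> w"
      then have "U \<in> w" "V \<in> w" using UV unfolding down_def by auto
      then have "U \<union> V \<in> w" using Idl_Un w(1) by blast
      then show "down (U \<union> V) \<subseteq> w" using IdlD(3)[OF w(1)] unfolding down_def by blast
    qed
    moreover have "{down U, down V} \<subseteq> Idl Om" using down_Idl UV by blast
    moreover have "down (U \<union> V) \<in> F" using UV(3) unfolding pf_def by simp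
    ultimately have "{down U, down V} \<inter> F \<noteq> {}" using cpr by blast
    then show "U \<in> pf F \<or> V \<in> pf F" using UV unfolding pf_def by auto
  qed
  have f0: "pf F \<subseteq> Om" unfolding pf_def by auto
  show ?thesis unfolding primef_def using f0 f1 f2 f3 f4 f5 by (intro conjI)
qed

lemma primefD:
  assumes "primef P"
  shows "P \<subseteq> Om" "X \<in> P" "{} \<notin> P" "\<And>U V. U \<in> P \<Longrightarrow> V \<in> Om \<Longrightarrow> U \<subseteq> V \<Longrightarrow> V \<in> P"
    "\<And>U V. U \<in> P \<Longrightarrow> V \<in> P \<Longrightarrow> U \<inter> V \<in> P"
    "\<And>U V. U \<in> Om \<Longrightarrow> V \<in> Om \<Longrightarrow> U \<union> V \<in> P \<Longrightarrow> U \<in> P \<or> V \<in> P"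
proof -
  note c = assms[unfolded primef_def]
  note c2 = conjunct2[OF c] note c3 = conjunct2[OF c2] note c4 = conjunct2[OF c3] note c5 = conjunct2[OF c4]
  show "P \<subseteq> Om" by (rule conjunct1[OF c])
  show "X \<in> P" by (rule conjunct1[OF c2])
  show "{} \<notin> P" by (rule conjunct1[OF c3])
  show "\<And>U V. U \<in> P \<Longrightarrow> V \<in> Om \<Longrightarrow> U \<subseteq> V \<Longrightarrow> V \<in> P" using conjunct1[OF c4] by blast
  show "\<And>U V. U \<in> P \<Longrightarrow> V \<in> P \<Longrightarrow> U \<inter> V \<in> P" using conjunct1[OF c5] by blast
  show "\<And>U V. U \<in> Om \<Longrightarrow> V \<in> Om \<Longrightarrow> U \<union> V \<in> P \<Longrightarrow> U \<in> P \<or> V \<in> P" using conjunct2[OF c5] by blast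
qed

lemma primefI:
  assumes "P \<subseteq> Om" "X \<in> P" "{} \<notin> P" "\<And>U V. U \<in> P \<Longrightarrow> V \<in> Om \<Longrightarrow> U \<subseteq> V \<Longrightarrow> V \<in> P"
    "\<And>U V. U \<in> P \<Longrightarrow> V \<in> P \<Longrightarrow> U \<inter> V \<in> P"
    "\<And>U V. U \<in> Om \<Longrightarrow> V \<in> Om \<Longrightarrow> U \<union> V \<in> P \<Longrightarrow> U \<in> P \<or> V \<in> P"
  shows "primef P"
  unfolding primef_def using assms by (intro conjI ballI impI) auto

lemma primef_Inter: assumes P: "primef P" shows "finite K \<Longrightarrow> K \<subseteq> P \<Longrightarrow> X \<inter> \<Inter>K \<in> P"
proof (induction K rule: finite_induct)
  case empty then show ?case using primefD(2)[OF P] by simp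
next
  case (insert a K)
  have "a \<in> Om" using insert primefD(1)[OF P] by blast
  then have "X \<inter> \<Inter>(insert a K) = a \<inter> (X \<inter> \<Inter>K)" using Om_sub[of a] by auto
  then show ?case using insert primefD(5)[OF P, of a "X \<inter> \<Inter>K"] by auto
qed

lemma primef_Union: assumes P: "primef P" shows "finite K \<Longrightarrow> K \<subseteq> Om \<Longrightarrow> \<Union>K \<in> P \<Longrightarrow> \<exists>U\<in>K. U \<in> P"
proof (induction K rule: finite_induct)
  case empty then show ?case using primefD(3)[OF P] by simp
next
  case (insert a K)
  have "\<Union>K \<in> Om" using Om_Union insert by blast
  then have "a \<in> P \<or> \<Union>K \<in> P" using primefD(6)[OF P, of a "\<Union>K"] insert by auto
  then show ?case using insert by blast
qed

definition pt :: "'a set set \<Rightarrow> 'a set set set" where "pt P = {I\<in>Idl Om. I \<inter> P \<noteq> {}}"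

lemma pf_pt: assumes "primef P" shows "pf (pt P) = P"
proof
  show "pf (pt P) \<subseteq> P"
  proof
    fix W assume "W \<in> pf (pt P)"
    then have W: "W \<in> Om" "down W \<inter> P \<noteq> {}" unfolding pf_def pt_def by auto
    then obtain U where "U \<in> P" "U \<subseteq> W" unfolding down_def by auto
    then show "W \<in> P" using primefD(4)[OF assms] W by blast
  qed
  show "P \<subseteq> pf (pt P)"
  proof
    fix W assume "W \<in> P"
    then have "W \<in> Om" using primefD(1)[OF assms] by blast
    then have "W \<in> down W" unfolding down_def by auto
    then show "W \<in> pf (pt P)" using \<open>W \<in> P\<close> \<open>W \<in> Om\<close> down_Idl[OF \<open>W \<in> Om\<close>] unfolding pf_def pt_def by auto
  qed
qed

lemma gen_Idl:
  assumes "\<And>I. I \<in> A \<Longrightarrow> I \<subseteq> Om"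
  shows "{W\<in>Om. \<exists>A'. finite A' \<and> A' \<subseteq> \<Union>A \<and> W \<subseteq> \<Union>A'} \<in> Idl Om" (is "?K \<in> _")
proof (rule IdlI)
  show "?K \<subseteq> Om" by auto
  show "?K \<noteq> {}" using Om_empty by blast
  show "\<And>a b. a \<in> ?K \<Longrightarrow> b \<in> Om \<Longrightarrow> b \<subseteq> a \<Longrightarrow> b \<in> ?K" by blast
  fix a b assume "a \<in> ?K" "b \<in> ?K"
  then obtain A1 A2 where A: "finite A1" "A1 \<subseteq> \<Union>A" "a \<subseteq> \<Union>A1" "finite A2" "A2 \<subseteq> \<Union>A" "b \<subseteq> \<Union>A2"
    "a \<in> Om" "b \<in> Om" by blast
  then have "a \<union> b \<in> ?K" using Om_Un[of a b] by (intro CollectI conjI exI[of _ "A1 \<union> A2"]) auto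
  then show "\<exists>c\<in>?K. a \<subseteq> c \<and> b \<subseteq> c" by blast
qed

lemma pt_Xhat: assumes P: "primef P" shows "pt P \<in> Xhat Om"
proof -
  have 1: "pt P \<subseteq> Idl Om" unfolding pt_def by auto
  have 2: "pt P \<noteq> {}" using Om_Idl primefD(2)[OF P] Om_X unfolding pt_def by blast
  have 3: "\<forall>I\<in>pt P. \<forall>J\<in>Idl Om. I \<subseteq> J \<longrightarrow> J \<in> pt P" unfolding pt_def by blast
  have 4: "\<forall>I\<in>pt P. \<forall>J\<in>pt P. \<forall>M. is_glb_in (Idl Om) (\<subseteq>) {I, J} M \<longrightarrow> M \<in> pt P"
  proof (intro ballI allI impI)
    fix I J M assume IJ: "I \<in> pt P" "J \<in> pt P" and M: "is_glb_in (Idl Om) (\<subseteq>) {I, J} M"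
    obtain U V where UV: "U \<in> I" "U \<in> P" "V \<in> J" "V \<in> P" using IJ unfolding pt_def by blast
    have II: "I \<in> Idl Om" "J \<in> Idl Om" using IJ unfolding pt_def by auto
    have W: "U \<inter> V \<in> P" using primefD(5)[OF P UV(2,4)] .
    then have WO: "U \<inter> V \<in> Om" using primefD(1)[OF P] by blast
    have "down (U \<inter> V) \<subseteq> I" using IdlD(3)[OF II(1) UV(1)] unfolding down_def by blast
    moreover have "down (U \<inter> V) \<subseteq> J" using IdlD(3)[OF II(2) UV(3)] unfolding down_def by blast
    moreover have "M \<in> Idl Om" "\<forall>w\<in>Idl Om. (\<forall>a\<in>{I, J}. w \<subseteq> a) \<longrightarrow> w \<subseteq> M"
      using M unfolding is_glb_in_def by auto
    ultimately have "down (U \<inter> V) \<subseteq> M" "M \<in> Idl Om" using down_Idl[OF WO] by auto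
    moreover have "U \<inter> V \<in> down (U \<inter> V)" using WO unfolding down_def by auto
    ultimately show "M \<in> pt P" using W unfolding pt_def by blast
  qed
  have 5: "\<forall>A\<subseteq>Idl Om. \<forall>J. is_lub_in (Idl Om) (\<subseteq>) A J \<longrightarrow> J \<in> pt P \<longrightarrow> A \<inter> pt P \<noteq> {}"
  proof (intro allI impI)
    fix A J assume A: "A \<subseteq> Idl Om" and J: "is_lub_in (Idl Om) (\<subseteq>) A J" and JP: "J \<in> pt P"
    define K where "K = {W\<in>Om. \<exists>A'. finite A' \<and> A' \<subseteq> \<Union>A \<and> W \<subseteq> \<Union>A'}"
    have KI: "K \<in> Idl Om" unfolding K_def using gen_Idl[of A] A IdlD(1) by blast
    have "I \<subseteq> K" if "I \<in> A" for I
    proof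
      fix W assume "W \<in> I"
      then have "W \<in> Om" using that A IdlD(1) by blast
      then show "W \<in> K" unfolding K_def using \<open>W \<in> I\<close> that by (intro CollectI conjI exI[of _ "{W}"]) auto
    qed
    then have "J \<subseteq> K" using J KI unfolding is_lub_in_def by blast
    obtain U where U: "U \<in> J" "U \<in> P" using JP unfolding pt_def by blast
    have "U \<in> K" using \<open>J \<subseteq> K\<close> U(1) by blast
    then have "\<exists>A'. finite A' \<and> A' \<subseteq> \<Union>A \<and> U \<subseteq> \<Union>A'" unfolding K_def by simp
    then obtain A' where A': "finite A'" "A' \<subseteq> \<Union>A" "U \<subseteq> \<Union>A'" by blast
    have "A' \<subseteq> Om" using A' A IdlD(1) by blast
    then have "\<Union>A' \<in> Om" using Om_Union A' by blast
    then have "\<Union>A' \<in> P" using primefD(4)[OF P U(2)] A' by blast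
    then obtain W where "W \<in> A'" "W \<in> P" using primef_Union[OF P A'(1) \<open>A' \<subseteq> Om\<close>] by blast
    then obtain I where "I \<in> A" "W \<in> I" using A' by blast
    then have "I \<in> pt P" using A \<open>W \<in> P\<close> unfolding pt_def by blast
    then show "A \<inter> pt P \<noteq> {}" using \<open>I \<in> A\<close> by blast
  qed
  have "completely_prime_filter Om (pt P)"
    unfolding completely_prime_filter_def using 1 2 3 4 5 by (intro conjI)
  then show ?thesis unfolding Xhat_def by simp
qed

end

context setting begin

lemma prime_exists:
  assumes W0: "W0 \<in> Om" and K: "K \<in> Idl Om" and nO: "W0 \<notin> K"
  shows "\<exists>P. primef P \<and> W0 \<in> P \<and> P \<inter> K = {}"
proof -
  define A where "A = {I \<in> Idl Om. K \<subseteq> I \<and> W0 \<notin> I}"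
  have "\<forall>C\<in>chains A. \<exists>U\<in>A. \<forall>Y\<in>C. Y \<subseteq> U"
  proof
    fix C assume C: "C \<in> chains A"
    then have CA: "C \<subseteq> A" and ch: "\<forall>I1\<in>C. \<forall>I2\<in>C. I1 \<subseteq> I2 \<or> I2 \<subseteq> I1"
      unfolding chains_def chain_subset_def by auto
    show "\<exists>U\<in>A. \<forall>Y\<in>C. Y \<subseteq> U"
    proof (cases "C = {}")
      case True
      have "K \<in> A" using K nO unfolding A_def by auto
      then show ?thesis using True by blast
    next
      case False
      have CI: "\<And>I. I \<in> C \<Longrightarrow> I \<in> Idl Om" "\<And>I. I \<in> C \<Longrightarrow> K \<subseteq> I" "\<And>I. I \<in> C \<Longrightarrow> W0 \<notin> I"
        using CA unfolding A_def by auto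
      have "\<Union>C \<in> Idl Om"
      proof (rule IdlI)
        show "\<Union>C \<subseteq> Om" using CI(1) IdlD(1) by blast
        obtain I where "I \<in> C" using False by blast
        then show "\<Union>C \<noteq> {}" using CI(1) IdlD(2) by blast
        show "\<And>a b. a \<in> \<Union>C \<Longrightarrow> b \<in> Om \<Longrightarrow> b \<subseteq> a \<Longrightarrow> b \<in> \<Union>C" using CI(1) IdlD(3) by blast
        fix a b assume "a \<in> \<Union>C" "b \<in> \<Union>C"
        then obtain I1 I2 where I12: "I1 \<in> C" "I2 \<in> C" "a \<in> I1" "b \<in> I2" by blast
        then consider "I1 \<subseteq> I2" | "I2 \<subseteq> I1" using ch by blast
        then show "\<exists>c\<in>\<Union>C. a \<subseteq> c \<and> b \<subseteq> c"
        proof cases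
          case 1
          then obtain c where "c \<in> I2" "a \<subseteq> c" "b \<subseteq> c" using IdlD(4)[OF CI(1)[OF I12(2)], of a b] I12 by blast
          then show ?thesis using I12 by blast
        next
          case 2
          then obtain c where "c \<in> I1" "a \<subseteq> c" "b \<subseteq> c" using IdlD(4)[OF CI(1)[OF I12(1)], of a b] I12 by blast
          then show ?thesis using I12 by blast
        qed
      qed
      moreover have "K \<subseteq> \<Union>C" using False CI(2) by blast
      moreover have "W0 \<notin> \<Union>C" using CI(3) by blast
      ultimately have "\<Union>C \<in> A" unfolding A_def by blast
      then show ?thesis by blast
    qed
  qed
  then obtain M where M: "M \<in> A" and max: "\<forall>Y\<in>A. M \<subseteq> Y \<longrightarrow> Y = M"
    using Zorn_Lemma2[of A] by blast
  have MI: "M \<in> Idl Om" "K \<subseteq> M" "W0 \<notin> M" using M unfolding A_def by auto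
  have ext: "\<exists>a\<in>M. W0 \<subseteq> a \<union> W" if W: "W \<in> Om" "W \<notin> M" for W
  proof (rule ccontr)
    assume nex: "\<not> (\<exists>a\<in>M. W0 \<subseteq> a \<union> W)"
    define M1 where "M1 = {U\<in>Om. \<exists>a\<in>M. U \<subseteq> a \<union> W}"
    have M1I: "M1 \<in> Idl Om"
    proof (rule IdlI)
      show "M1 \<subseteq> Om" unfolding M1_def by auto
      have "{} \<in> M1" unfolding M1_def using Om_empty Idl_empty[OF MI(1)] by auto
      then show "M1 \<noteq> {}" by auto
      show "\<And>a b. a \<in> M1 \<Longrightarrow> b \<in> Om \<Longrightarrow> b \<subseteq> a \<Longrightarrow> b \<in> M1" unfolding M1_def by blast
      fix a b assume "a \<in> M1" "b \<in> M1"
      then obtain a1 a2 where aa: "a \<in> Om" "b \<in> Om" "a1 \<in> M" "a2 \<in> M" "a \<subseteq> a1 \<union> W" "b \<subseteq> a2 \<union> W"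
        unfolding M1_def by auto
      then have "a1 \<union> a2 \<in> M" using Idl_Un[OF MI(1)] by blast
      then have "a \<union> b \<in> M1" unfolding M1_def using Om_Un[OF aa(1,2)] aa by blast
      then show "\<exists>c\<in>M1. a \<subseteq> c \<and> b \<subseteq> c" by blast
    qed
    have "M \<subseteq> M1" unfolding M1_def using IdlD(1)[OF MI(1)] by blast
    moreover have "W \<in> M1" unfolding M1_def using W Idl_empty[OF MI(1)] by blast
    moreover have "W0 \<notin> M1" unfolding M1_def using nex by blast
    ultimately have "M1 \<in> A" using M1I MI(2) unfolding A_def by blast
    then have "M1 = M" using max \<open>M \<subseteq> M1\<close> by blast
    then show False using \<open>W \<in> M1\<close> W(2) by blast
  qed
  define P where "P = Om - M"
  have "primef P"
  proof (rule primefI)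
    show "P \<subseteq> Om" unfolding P_def by auto
    have "X \<notin> M" using IdlD(3)[OF MI(1), of X W0] Om_sub[OF W0] MI(3) W0 by blast
    then show "X \<in> P" unfolding P_def using Om_X by auto
    show "{} \<notin> P" unfolding P_def using Idl_empty[OF MI(1)] by auto
    show "\<And>U V. U \<in> P \<Longrightarrow> V \<in> Om \<Longrightarrow> U \<subseteq> V \<Longrightarrow> V \<in> P" unfolding P_def using IdlD(3)[OF MI(1)] by blast
    show "\<And>U V. U \<in> Om \<Longrightarrow> V \<in> Om \<Longrightarrow> U \<union> V \<in> P \<Longrightarrow> U \<in> P \<or> V \<in> P" unfolding P_def using Idl_Un[OF MI(1)] by blast
    fix U V assume UV: "U \<in> P" "V \<in> P"
    then have U: "U \<in> Om" "U \<notin> M" and V: "V \<in> Om" "V \<notin> M" unfolding P_def by auto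
    show "U \<inter> V \<in> P"
    proof (rule ccontr)
      assume "U \<inter> V \<notin> P"
      then have UVM: "U \<inter> V \<in> M" unfolding P_def using Om_Int[OF U(1) V(1)] by auto
      obtain a1 where a1: "a1 \<in> M" "W0 \<subseteq> a1 \<union> U" using ext U by blast
      obtain a2 where a2: "a2 \<in> M" "W0 \<subseteq> a2 \<union> V" using ext V by blast
      have "a1 \<union> a2 \<in> M" using Idl_Un[OF MI(1) a1(1) a2(1)] .
      then have "a1 \<union> a2 \<union> (U \<inter> V) \<in> M" using Idl_Un[OF MI(1) _ UVM] by blast
      moreover have "W0 \<subseteq> a1 \<union> a2 \<union> (U \<inter> V)" using a1(2) a2(2) by blast
      ultimately have "W0 \<in> M" using IdlD(3)[OF MI(1)] W0 by blast
      then show False using MI(3) by blast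
    qed
  qed
  moreover have "W0 \<in> P" unfolding P_def using W0 MI(3) by auto
  moreover have "P \<inter> K = {}" unfolding P_def using MI(2) by auto
  ultimately show ?thesis by blast
qed

lemma compact:
  assumes W0: "W0 \<in> Om" and C: "C \<subseteq> Om"
    and cov: "\<And>F. F \<in> Xhat Om \<Longrightarrow> W0 \<in> pf F \<Longrightarrow> \<exists>V\<in>C. V \<in> pf F"
  shows "\<exists>C'. finite C' \<and> C' \<subseteq> C \<and> W0 \<subseteq> \<Union>C'"
proof (rule ccontr)
  assume nc: "\<not> (\<exists>C'. finite C' \<and> C' \<subseteq> C \<and> W0 \<subseteq> \<Union>C')"
  define K where "K = {W\<in>Om. \<exists>A'. finite A' \<and> A' \<subseteq> \<Union>{C} \<and> W \<subseteq> \<Union>A'}"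
  have KI: "K \<in> Idl Om" unfolding K_def by (rule gen_Idl) (use C in auto)
  have "W0 \<notin> K" unfolding K_def using nc by simp
  then obtain P where P: "primef P" "W0 \<in> P" "P \<inter> K = {}" using prime_exists[OF W0 KI] by blast
  have "pt P \<in> Xhat Om" "pf (pt P) = P" using pt_Xhat[OF P(1)] pf_pt[OF P(1)] by auto
  then obtain V where "V \<in> C" "V \<in> P" using cov[of "pt P"] P(2) by auto
  moreover have "V \<in> K" unfolding K_def using \<open>V \<in> C\<close> C by (intro CollectI conjI exI[of _ "{V}"]) auto
  ultimately show False using P(3) by blast
qed

lemma realize:
  assumes F: "F \<in> Xhat Om" and K: "finite K" and A: "\<And>k. k \<in> K \<Longrightarrow> A k \<in> Om" and W0: "W0 \<in> pf F"
  shows "\<exists>x\<in>W0. x \<in> X \<and> (\<forall>k\<in>K. x \<in> A k \<longleftrightarrow> A k \<in> pf F)"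
proof -
  have P: "primef (pf F)" by (rule pf_primef[OF F])
  define S where "S = insert W0 {A k | k. k \<in> K \<and> A k \<in> pf F}"
  have "finite S" unfolding S_def using K by auto
  moreover have "S \<subseteq> pf F" unfolding S_def using W0 by auto
  ultimately have W: "X \<inter> \<Inter>S \<in> pf F" using primef_Inter[OF P] by blast
  define U where "U = \<Union>{A k | k. k \<in> K \<and> A k \<notin> pf F}"
  have fin: "finite {A k | k. k \<in> K \<and> A k \<notin> pf F}" using K by auto
  have sub: "{A k | k. k \<in> K \<and> A k \<notin> pf F} \<subseteq> Om" using A by auto
  have UO: "U \<in> Om" unfolding U_def using Om_Union[OF fin sub] .
  have "\<not> (X \<inter> \<Inter>S \<subseteq> U)"
  proof
    assume "X \<inter> \<Inter>S \<subseteq> U"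
    then have "U \<in> pf F" using primefD(4)[OF P W UO] by blast
    then obtain V where "V \<in> {A k | k. k \<in> K \<and> A k \<notin> pf F}" "V \<in> pf F"
      using primef_Union[OF P fin sub] unfolding U_def by blast
    then show False by auto
  qed
  then obtain x where x: "x \<in> X" "x \<in> \<Inter>S" "x \<notin> U" by blast
  have "x \<in> W0" using x(2) unfolding S_def by auto
  moreover have "\<forall>k\<in>K. x \<in> A k \<longleftrightarrow> A k \<in> pf F"
  proof
    fix k assume k: "k \<in> K"
    show "x \<in> A k \<longleftrightarrow> A k \<in> pf F"
    proof
      assume "x \<in> A k" then show "A k \<in> pf F" using x(3) k unfolding U_def by blast
    next
      assume "A k \<in> pf F" then show "x \<in> A k" using x(2) k unfolding S_def by blast
    qed
  qed
  ultimately show ?thesis using x(1) by blast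
qed

end

context setting begin

abbreviation "rep \<equiv> is_rep T Om D0"

lemma repD:
  assumes "rep I b Ob h"
  shows "finite I" "consistent_family I b Ob" "\<And>i. i \<in> I \<Longrightarrow> Ob i \<in> Om" "\<And>i. i \<in> I \<Longrightarrow> b i \<in> D0"
    "h = step_join X I b Ob"
  using assms unfolding is_rep_def by auto

lemma rep_lub:
  assumes R: "rep I b Ob h" and x: "x \<in> X"
  shows "is_lub {b i |i. i \<in> I \<and> x \<in> Ob i} (h x)"
proof -
  let ?J = "{i\<in>I. x \<in> Ob i}"
  have "x \<in> (\<Inter>j\<in>?J. Ob j)" by auto
  then have "(\<Inter>j\<in>?J. Ob j) \<noteq> {}" by blast
  moreover have cf: "\<forall>J\<subseteq>I. (\<Inter>j\<in>J. Ob j) \<noteq> {} \<longrightarrow> (\<exists>u. \<forall>j\<in>J. b j \<le> u)"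
    using repD(2)[OF R] unfolding consistent_family_def .
  moreover have "?J \<subseteq> I" by auto
  ultimately obtain u where u: "\<forall>j\<in>?J. b j \<le> u" using cf[rule_format, of ?J] by blast
  then obtain z where z: "is_lub {b i |i. i \<in> I \<and> x \<in> Ob i} z" using bounded[of "{b i |i. i \<in> I \<and> x \<in> Ob i}" u] by auto
  have "h x = lub {b i |i. i \<in> I \<and> x \<in> Ob i}" using repD(5)[OF R] x unfolding step_join_def by simp
  then show ?thesis using lub_eq[OF z] z by simp
qed

definition lift :: "('a \<Rightarrow> 'b) \<Rightarrow> 'a set set set \<Rightarrow> 'b" where
  "lift h F = lub {v. \<exists>W\<in>pf F. \<forall>x\<in>W. v \<le> h x}"

lemma lift_val:
  assumes R: "rep I b Ob h" and F: "F \<in> Xhat Om"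
  shows "is_lub {b i |i. i \<in> I \<and> Ob i \<in> pf F} (lift h F)"
proof -
  have rl: "\<exists>x\<in>W0. x \<in> X \<and> (\<forall>i\<in>I. x \<in> Ob i \<longleftrightarrow> Ob i \<in> pf F)" if "W0 \<in> pf F" for W0
    using realize[OF F repD(1)[OF R], of Ob W0] repD(3)[OF R] that by blast
  have P: "primef (pf F)" by (rule pf_primef[OF F])
  obtain x0 where x0: "x0 \<in> X" "\<forall>i\<in>I. x0 \<in> Ob i \<longleftrightarrow> Ob i \<in> pf F" using rl[OF primefD(2)[OF P]] by blast
  have seteq: "{b i |i. i \<in> I \<and> x \<in> Ob i} = {b i |i. i \<in> I \<and> Ob i \<in> pf F}"
    if "\<forall>i\<in>I. x \<in> Ob i \<longleftrightarrow> Ob i \<in> pf F" for x using that by auto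
  define val where "val = h x0"
  have vl: "is_lub {b i |i. i \<in> I \<and> Ob i \<in> pf F} val"
    using rep_lub[OF R x0(1)] seteq[OF x0(2)] unfolding val_def by simp
  define V where "V = X \<inter> \<Inter>{Ob i | i. i \<in> I \<and> Ob i \<in> pf F}"
  have "finite {Ob i | i. i \<in> I \<and> Ob i \<in> pf F}" using repD(1)[OF R] by auto
  then have V: "V \<in> pf F" unfolding V_def using primef_Inter[OF P] by blast
  have Vle: "val \<le> h y" if "y \<in> V" for y
  proof -
    have y: "y \<in> X" "\<And>i. i \<in> I \<Longrightarrow> Ob i \<in> pf F \<Longrightarrow> y \<in> Ob i" using that unfolding V_def by auto
    show ?thesis by (rule lub_mono[OF vl rep_lub[OF R y(1)]]) (use y(2) in auto)
  qed
  have main: "is_lub {v. \<exists>W\<in>pf F. \<forall>x\<in>W. v \<le> h x} val"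
    unfolding is_lub_iff
  proof (intro conjI allI impI ballI)
    fix v assume "v \<in> {v. \<exists>W\<in>pf F. \<forall>x\<in>W. v \<le> h x}"
    then obtain W where W: "W \<in> pf F" "\<forall>x\<in>W. v \<le> h x" by blast
    then obtain x where x: "x \<in> W" "x \<in> X" "\<forall>i\<in>I. x \<in> Ob i \<longleftrightarrow> Ob i \<in> pf F" using rl by blast
    have "is_lub {b i |i. i \<in> I \<and> Ob i \<in> pf F} (h x)" using rep_lub[OF R x(2)] seteq[OF x(3)] by simp
    then have "h x = val" using vl is_lub_unique by blast
    then show "v \<le> val" using W(2) x(1) by auto
  next
    fix u assume "\<forall>v\<in>{v. \<exists>W\<in>pf F. \<forall>x\<in>W. v \<le> h x}. v \<le> u"
    then show "val \<le> u" using V Vle by blast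
  qed
  have "lift h F = val" unfolding lift_def using lub_eq[OF main] .
  then show ?thesis using vl by simp
qed

lemma lift_pt:
  assumes R: "rep I b Ob h" and F: "F \<in> Xhat Om" and W0: "W0 \<in> pf F"
  shows "\<exists>x\<in>W0. x \<in> X \<and> h x = lift h F \<and> (\<forall>i\<in>I. x \<in> Ob i \<longleftrightarrow> Ob i \<in> pf F)"
proof -
  obtain x where x: "x \<in> W0" "x \<in> X" "\<forall>i\<in>I. x \<in> Ob i \<longleftrightarrow> Ob i \<in> pf F"
    using realize[OF F repD(1)[OF R], of Ob W0] repD(3)[OF R] W0 by blast
  have "{b i |i. i \<in> I \<and> x \<in> Ob i} = {b i |i. i \<in> I \<and> Ob i \<in> pf F}" using x(3) by auto
  then have "is_lub {b i |i. i \<in> I \<and> Ob i \<in> pf F} (h x)" using rep_lub[OF R x(2)] by simp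
  then have "h x = lift h F" using lift_val[OF R F] is_lub_unique by blast
  then show ?thesis using x by blast
qed

lemma lift_nbhd:
  assumes R: "rep I b Ob h" and F: "F \<in> Xhat Om"
  shows "\<exists>V\<in>pf F. V \<subseteq> X \<and> (\<forall>x\<in>V. lift h F \<le> h x) \<and> (\<forall>G\<in>Xhat Om. V \<in> pf G \<longrightarrow> lift h F \<le> lift h G)"
proof -
  have P: "primef (pf F)" by (rule pf_primef[OF F])
  define V where "V = X \<inter> \<Inter>{Ob i | i. i \<in> I \<and> Ob i \<in> pf F}"
  have "finite {Ob i | i. i \<in> I \<and> Ob i \<in> pf F}" using repD(1)[OF R] by auto
  then have V: "V \<in> pf F" unfolding V_def using primef_Inter[OF P] by blast
  have 1: "lift h F \<le> h y" if "y \<in> V" for y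
  proof -
    have y: "y \<in> X" "\<And>i. i \<in> I \<Longrightarrow> Ob i \<in> pf F \<Longrightarrow> y \<in> Ob i" using that unfolding V_def by auto
    show ?thesis by (rule lub_mono[OF lift_val[OF R F] rep_lub[OF R y(1)]]) (use y(2) in auto)
  qed
  have 2: "lift h F \<le> lift h G" if G: "G \<in> Xhat Om" "V \<in> pf G" for G
  proof -
    have PG: "primef (pf G)" by (rule pf_primef[OF G(1)])
    have "Ob i \<in> pf G" if "i \<in> I" "Ob i \<in> pf F" for i
      using primefD(4)[OF PG G(2), of "Ob i"] repD(3)[OF R that(1)] that unfolding V_def by blast
    then show ?thesis by (intro lub_mono[OF lift_val[OF R F] lift_val[OF R G(1)]]) auto
  qed
  show ?thesis using V 1 2 unfolding V_def by blast
qed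

lemma Babs_rep: "h \<in> Babs T Om D0 \<Longrightarrow> \<exists>I b Ob. rep I b Ob h"
  unfolding Babs_def by blast

lemma rep_Babs: "rep I b Ob h \<Longrightarrow> h \<in> Babs T Om D0"
  unfolding Babs_def by blast

definition sing :: "'b \<Rightarrow> 'a set \<Rightarrow> 'a \<Rightarrow> 'b" where
  "sing a V = step_join X {0} (\<lambda>_. a) (\<lambda>_. V)"

lemma sing_rep: "a \<in> D0 \<Longrightarrow> V \<in> Om \<Longrightarrow> rep {0} (\<lambda>_. a) (\<lambda>_. V) (sing a V)"
  unfolding is_rep_def sing_def consistent_family_def by auto

lemma sing_val: assumes "a \<in> D0" "V \<in> Om" "x \<in> V" shows "sing a V x = a"
proof -
  have "x \<in> X" using Om_sub assms by blast
  have "{(\<lambda>_. a) i |i. i \<in> {0::nat} \<and> x \<in> V} = {a}" using assms by auto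
  then have "is_lub {a} (sing a V x)" using rep_lub[OF sing_rep[OF assms(1,2)] \<open>x \<in> X\<close>] by simp
  then show ?thesis using is_lub_single is_lub_unique by blast
qed

lemma sing_lift: assumes "a \<in> D0" "V \<in> Om" "F \<in> Xhat Om" "V \<in> pf F" shows "lift (sing a V) F = a"
proof -
  have "{(\<lambda>_. a) i |i. i \<in> {0::nat} \<and> V \<in> pf F} = {a}" using assms by auto
  then have "is_lub {a} (lift (sing a V) F)" using lift_val[OF sing_rep[OF assms(1,2)] assms(3)] by simp
  then show ?thesis using is_lub_single is_lub_unique by blast
qed

definition h0 :: "'a \<Rightarrow> 'b" where "h0 = step_join X {} (\<lambda>_. undefined) (\<lambda>_. {})"

lemma h0_rep: "rep {} (\<lambda>_. undefined) (\<lambda>_. {}) h0"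
  unfolding is_rep_def h0_def consistent_family_def by auto

lemma precD: "prec T Om D0 h' h \<Longrightarrow> \<exists>I b Ob. rep I b Ob h' \<and> (\<forall>i\<in>I. \<forall>x\<in>Ob i. x \<in> X \<and> b i \<lless> h x)"
  unfolding prec_def by blast

lemma precI: "rep I b Ob h' \<Longrightarrow> (\<And>i x. i \<in> I \<Longrightarrow> x \<in> Ob i \<Longrightarrow> b i \<lless> h x) \<Longrightarrow> prec T Om D0 h' h"
  unfolding prec_def using repD(3) Om_sub by blast

lemma prec_le: assumes "prec T Om D0 h' h" "x \<in> X" shows "h' x \<le> h x"
proof -
  obtain I b Ob where R: "rep I b Ob h'" and c: "\<forall>i\<in>I. \<forall>x\<in>Ob i. x \<in> X \<and> b i \<lless> h x"
    using precD[OF assms(1)] by blast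
  show ?thesis by (rule is_lub_least[OF rep_lub[OF R assms(2)]]) (use c wb_le in blast)
qed

lemma prec_lift:
  assumes "prec T Om D0 h' h" "h \<in> Babs T Om D0"
  shows "\<exists>I b Ob. rep I b Ob h' \<and> (\<forall>i\<in>I. \<forall>F\<in>Xhat Om. Ob i \<in> pf F \<longrightarrow> b i \<lless> lift h F)"
proof -
  obtain I b Ob where R: "rep I b Ob h'" and c: "\<forall>i\<in>I. \<forall>x\<in>Ob i. x \<in> X \<and> b i \<lless> h x"
    using precD[OF assms(1)] by blast
  obtain I2 b2 Ob2 where R2: "rep I2 b2 Ob2 h" using Babs_rep[OF assms(2)] by blast
  have "b i \<lless> lift h F" if asm: "i \<in> I" "F \<in> Xhat Om" "Ob i \<in> pf F" for i F
  proof -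
    obtain x where "x \<in> Ob i" "h x = lift h F" using lift_pt[OF R2 asm(2,3)] by blast
    then show ?thesis using c asm(1) by metis
  qed
  then show ?thesis using R by blast
qed

lemma prec_lift_le:
  assumes "prec T Om D0 h' h" "h \<in> Babs T Om D0" "F \<in> Xhat Om"
  shows "lift h' F \<le> lift h F"
proof -
  obtain I b Ob where R: "rep I b Ob h'" and c: "\<forall>i\<in>I. \<forall>F\<in>Xhat Om. Ob i \<in> pf F \<longrightarrow> b i \<lless> lift h F"
    using prec_lift[OF assms(1,2)] by blast
  show ?thesis by (rule is_lub_least[OF lift_val[OF R assms(3)]]) (use c assms(3) wb_le in blast)
qed

end

context setting begin

abbreviation "RIC \<equiv> rounded_ideal_completion T Om D0"
abbreviation "CF \<equiv> (cont_fun_space Om :: ('a set set set \<Rightarrow> 'b) set)"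

lemma RICD:
  assumes "R \<in> RIC"
  shows "R \<subseteq> Babs T Om D0" "R \<noteq> {}"
    "\<And>h h'. h \<in> R \<Longrightarrow> h' \<in> Babs T Om D0 \<Longrightarrow> prec T Om D0 h' h \<Longrightarrow> h' \<in> R"
    "\<And>h1 h2. h1 \<in> R \<Longrightarrow> h2 \<in> R \<Longrightarrow> \<exists>h\<in>R. prec T Om D0 h1 h \<and> prec T Om D0 h2 h"
proof -
  have c: "R \<subseteq> Babs T Om D0 \<and> R \<noteq> {}
      \<and> (\<forall>h\<in>R. \<forall>h'\<in>Babs T Om D0. prec T Om D0 h' h \<longrightarrow> h' \<in> R)
      \<and> (\<forall>h1\<in>R. \<forall>h2\<in>R. \<exists>h\<in>R. prec T Om D0 h1 h \<and> prec T Om D0 h2 h)"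
    using assms unfolding rounded_ideal_completion_def by simp
  note c2 = conjunct2[OF c] note c3 = conjunct2[OF c2]
  show "R \<subseteq> Babs T Om D0" by (rule conjunct1[OF c])
  show "R \<noteq> {}" by (rule conjunct1[OF c2])
  show "\<And>h h'. h \<in> R \<Longrightarrow> h' \<in> Babs T Om D0 \<Longrightarrow> prec T Om D0 h' h \<Longrightarrow> h' \<in> R"
    using conjunct1[OF c3] by blast
  show "\<And>h1 h2. h1 \<in> R \<Longrightarrow> h2 \<in> R \<Longrightarrow> \<exists>h\<in>R. prec T Om D0 h1 h \<and> prec T Om D0 h2 h"
    using conjunct2[OF c3] by blast
qed

lemma RICI:
  assumes "R \<subseteq> Babs T Om D0" "R \<noteq> {}"
    "\<And>h h'. h \<in> R \<Longrightarrow> h' \<in> Babs T Om D0 \<Longrightarrow> prec T Om D0 h' h \<Longrightarrow> h' \<in> R"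
    "\<And>h1 h2. h1 \<in> R \<Longrightarrow> h2 \<in> R \<Longrightarrow> \<exists>h\<in>R. prec T Om D0 h1 h \<and> prec T Om D0 h2 h"
  shows "R \<in> RIC"
  unfolding rounded_ideal_completion_def using assms by (intro CollectI conjI ballI impI) auto

lemma CFD:
  assumes "f \<in> CF"
  shows "f \<in> extensional (Xhat Om)"
    "\<And>U. scott_open U \<Longrightarrow> \<exists>I\<in>Idl Om. {y \<in> Xhat Om. f y \<in> U} = OI Om I"
  using assms unfolding cont_fun_space_def by auto

lemma CFI:
  assumes "f \<in> extensional (Xhat Om)"
    "\<And>U. scott_open (U::'b set) \<Longrightarrow> \<exists>I\<in>Idl Om. {y \<in> Xhat Om. f y \<in> U} = OI Om I"
  shows "f \<in> CF"
  using assms unfolding cont_fun_space_def by auto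

lemma scott_openD:
  assumes "scott_open U"
  shows "\<And>x y. x \<in> U \<Longrightarrow> x \<le> y \<Longrightarrow> y \<in> U"
    "\<And>S z. directed S \<Longrightarrow> is_lub S z \<Longrightarrow> z \<in> U \<Longrightarrow> \<exists>s\<in>S. s \<in> U"
  using assms unfolding scott_open_def by blast+

lemma mem_F:
  assumes F: "F \<in> Xhat Om" and I: "I \<in> Idl Om"
  shows "I \<in> F \<longleftrightarrow> (\<exists>W\<in>I. W \<in> pf F)"
proof
  have cp: "completely_prime_filter Om F" using F unfolding Xhat_def by simp
  assume IF: "I \<in> F"
  let ?A = "{down W | W. W \<in> I}"
  have A: "?A \<subseteq> Idl Om" using down_Idl IdlD(1)[OF I] by blast
  have "is_lub_in (Idl Om) (\<subseteq>) ?A I"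
    unfolding is_lub_in_def
  proof (intro conjI ballI impI)
    show "I \<in> Idl Om" by (rule I)
    fix a assume "a \<in> ?A"
    then obtain W where "a = down W" "W \<in> I" by blast
    then show "a \<subseteq> I" using IdlD(3)[OF I] unfolding down_def by blast
  next
    fix w assume w: "w \<in> Idl Om" "\<forall>a\<in>?A. a \<subseteq> w"
    show "I \<subseteq> w"
    proof
      fix W assume "W \<in> I"
      then have "W \<in> down W" "down W \<in> ?A" using IdlD(1)[OF I] unfolding down_def by auto
      then show "W \<in> w" using w(2) by blast
    qed
  qed
  then have "?A \<inter> F \<noteq> {}" using cpfD(5)[OF cp A] IF by blast
  then obtain W where "W \<in> I" "down W \<in> F" by blast
  then show "\<exists>W\<in>I. W \<in> pf F" using IdlD(1)[OF I] unfolding pf_def by blast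
next
  have cp: "completely_prime_filter Om F" using F unfolding Xhat_def by simp
  assume "\<exists>W\<in>I. W \<in> pf F"
  then obtain W where W: "W \<in> I" "down W \<in> F" unfolding pf_def by blast
  have "down W \<subseteq> I" using IdlD(3)[OF I W(1)] unfolding down_def by blast
  then show "I \<in> F" using cpfD(3)[OF cp W(2) I] by blast
qed

lemma cont_nbhd:
  assumes f: "f \<in> CF" and U: "scott_open U" and F: "F \<in> Xhat Om" and fF: "f F \<in> U"
  shows "\<exists>V\<in>pf F. \<forall>G\<in>Xhat Om. V \<in> pf G \<longrightarrow> f G \<in> U"
proof -
  obtain J where J: "J \<in> Idl Om" "{y \<in> Xhat Om. f y \<in> U} = OI Om J" using CFD(2)[OF f U] by blast
  have "F \<in> OI Om J" using J(2) F fF by blast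
  then have "J \<in> F" unfolding OI_def by simp
  then obtain V where V: "V \<in> J" "V \<in> pf F" using mem_F[OF F J(1)] by blast
  have "f G \<in> U" if G: "G \<in> Xhat Om" "V \<in> pf G" for G
  proof -
    have "J \<in> G" using mem_F[OF G(1) J(1)] V(1) G(2) by blast
    then have "G \<in> OI Om J" unfolding OI_def using G(1) by simp
    then show ?thesis using J(2) by blast
  qed
  then show ?thesis using V(2) by blast
qed

lemma cont_intro:
  assumes Q: "\<And>F. F \<in> Xhat Om \<Longrightarrow> Q F \<Longrightarrow> \<exists>V\<in>pf F. \<forall>G\<in>Xhat Om. V \<in> pf G \<longrightarrow> Q G"
  shows "\<exists>J\<in>Idl Om. {F \<in> Xhat Om. Q F} = OI Om J"
proof -
  define J where "J = {W\<in>Om. \<forall>G\<in>Xhat Om. W \<in> pf G \<longrightarrow> Q G}"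
  have JI: "J \<in> Idl Om"
  proof (rule IdlI)
    show "J \<subseteq> Om" unfolding J_def by auto
    have "{} \<in> J" unfolding J_def using Om_empty primefD(3)[OF pf_primef] by blast
    then show "J \<noteq> {}" by blast
    show "\<And>a b. a \<in> J \<Longrightarrow> b \<in> Om \<Longrightarrow> b \<subseteq> a \<Longrightarrow> b \<in> J"
    proof -
      fix a b assume ab: "a \<in> J" "b \<in> Om" "b \<subseteq> a"
      have "Q G" if "G \<in> Xhat Om" "b \<in> pf G" for G
      proof -
        have "a \<in> Om" using ab(1) unfolding J_def by blast
        then have "a \<in> pf G" using primefD(4)[OF pf_primef[OF that(1)] that(2)] ab(3) by blast
        then show ?thesis using ab(1) that(1) unfolding J_def by blast
      qed
      then show "b \<in> J" unfolding J_def using ab(2) by blast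
    qed
    fix a b assume ab: "a \<in> J" "b \<in> J"
    have abO: "a \<in> Om" "b \<in> Om" using ab unfolding J_def by auto
    have "Q G" if "G \<in> Xhat Om" "a \<union> b \<in> pf G" for G
    proof -
      have "a \<in> pf G \<or> b \<in> pf G" using primefD(6)[OF pf_primef[OF that(1)] abO that(2)] .
      then show ?thesis using ab that(1) unfolding J_def by blast
    qed
    then have "a \<union> b \<in> J" unfolding J_def using Om_Un[OF abO] by blast
    then show "\<exists>c\<in>J. a \<subseteq> c \<and> b \<subseteq> c" by blast
  qed
  have "{F \<in> Xhat Om. Q F} = OI Om J"
  proof (rule set_eqI)
    fix F show "F \<in> {F \<in> Xhat Om. Q F} \<longleftrightarrow> F \<in> OI Om J"
    proof
      assume "F \<in> {F \<in> Xhat Om. Q F}"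
      then have F: "F \<in> Xhat Om" "Q F" by auto
      then obtain V where V: "V \<in> pf F" "\<forall>G\<in>Xhat Om. V \<in> pf G \<longrightarrow> Q G" using Q by blast
      have "V \<in> Om" using V(1) unfolding pf_def by auto
      then have "V \<in> J" unfolding J_def using V(2) by blast
      then have "J \<in> F" using mem_F[OF F(1) JI] V(1) by blast
      then show "F \<in> OI Om J" unfolding OI_def using F(1) by simp
    next
      assume "F \<in> OI Om J"
      then have F: "F \<in> Xhat Om" "J \<in> F" unfolding OI_def by auto
      then obtain W where "W \<in> J" "W \<in> pf F" using mem_F[OF F(1) JI] by blast
      then show "F \<in> {F \<in> Xhat Om. Q F}" using F(1) unfolding J_def by blast
    qed
  qed
  then show ?thesis using JI by blast
qed

definition Phi :: "('a \<Rightarrow> 'b) set \<Rightarrow> 'a set set set \<Rightarrow> 'b" where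
  "Phi R = (\<lambda>F. if F \<in> Xhat Om then lub {lift h F | h. h \<in> R} else undefined)"

lemma dirR: assumes R: "R \<in> RIC" and F: "F \<in> Xhat Om" shows "directed {lift h F | h. h \<in> R}"
  unfolding directed_def
proof (intro conjI ballI)
  show "{lift h F | h. h \<in> R} \<noteq> {}" using RICD(2)[OF R] by blast
  fix x y assume "x \<in> {lift h F | h. h \<in> R}" "y \<in> {lift h F | h. h \<in> R}"
  then obtain h1 h2 where h: "h1 \<in> R" "h2 \<in> R" "x = lift h1 F" "y = lift h2 F" by blast
  then obtain h where "h \<in> R" "prec T Om D0 h1 h" "prec T Om D0 h2 h" using RICD(4)[OF R] by blast
  moreover have "h \<in> Babs T Om D0" using \<open>h \<in> R\<close> RICD(1)[OF R] by blast
  ultimately have "lift h1 F \<le> lift h F" "lift h2 F \<le> lift h F" using prec_lift_le F by blast+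
  then show "\<exists>z\<in>{lift h F | h. h \<in> R}. x \<le> z \<and> y \<le> z" using h \<open>h \<in> R\<close> by blast
qed

lemma Phi_lub: assumes R: "R \<in> RIC" and F: "F \<in> Xhat Om" shows "is_lub {lift h F | h. h \<in> R} (Phi R F)"
proof -
  obtain z where z: "is_lub {lift h F | h. h \<in> R} z" using dcpo[OF dirR[OF R F]] by blast
  then show ?thesis unfolding Phi_def using F lub_eq[OF z] by simp
qed

lemma Phi_in: assumes R: "R \<in> RIC" shows "Phi R \<in> CF"
proof (rule CFI)
  show "Phi R \<in> extensional (Xhat Om)" unfolding extensional_def Phi_def by auto
  fix U :: "'b set" assume U: "scott_open U"
  show "\<exists>I\<in>Idl Om. {y \<in> Xhat Om. Phi R y \<in> U} = OI Om I"
  proof (rule cont_intro)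
    fix F assume F: "F \<in> Xhat Om" and PU: "Phi R F \<in> U"
    obtain s where "s \<in> {lift h F | h. h \<in> R}" "s \<in> U" using scott_openD(2)[OF U dirR[OF R F] Phi_lub[OF R F] PU] by blast
    then obtain h where h: "h \<in> R" "lift h F \<in> U" by blast
    obtain I b Ob where Rp: "rep I b Ob h" using Babs_rep h(1) RICD(1)[OF R] by blast
    obtain V where V: "V \<in> pf F" "\<forall>G\<in>Xhat Om. V \<in> pf G \<longrightarrow> lift h F \<le> lift h G" using lift_nbhd[OF Rp F] by blast
    have "Phi R G \<in> U" if "G \<in> Xhat Om" "V \<in> pf G" for G
    proof -
      have "lift h F \<le> Phi R G" using V(2) that is_lub_upper[OF Phi_lub[OF R that(1)]] h(1) order_trans by blast
      then show ?thesis using scott_openD(1)[OF U h(2)] by blast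
    qed
    then show "\<exists>V\<in>pf F. \<forall>G\<in>Xhat Om. V \<in> pf G \<longrightarrow> Phi R G \<in> U" using V(1) by blast
  qed
qed

definition psi :: "('a set set set \<Rightarrow> 'b) \<Rightarrow> ('a \<Rightarrow> 'b) set" where
  "psi f = {h \<in> Babs T Om D0. \<exists>I b Ob. rep I b Ob h \<and> (\<forall>i\<in>I. \<forall>F\<in>Xhat Om. Ob i \<in> pf F \<longrightarrow> b i \<lless> f F)}"

lemma psiD: "h \<in> psi f \<Longrightarrow> \<exists>I b Ob. rep I b Ob h \<and> (\<forall>i\<in>I. \<forall>F\<in>Xhat Om. Ob i \<in> pf F \<longrightarrow> b i \<lless> f F)"
  unfolding psi_def by blast

lemma psiI: "rep I b Ob h \<Longrightarrow> (\<And>i F. i \<in> I \<Longrightarrow> F \<in> Xhat Om \<Longrightarrow> Ob i \<in> pf F \<Longrightarrow> b i \<lless> f F) \<Longrightarrow> h \<in> psi f"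
  unfolding psi_def using rep_Babs by blast

lemma psi_le: assumes "h \<in> psi f" "F \<in> Xhat Om" shows "lift h F \<le> f F"
proof -
  obtain I b Ob where R: "rep I b Ob h" and c: "\<forall>i\<in>I. \<forall>F\<in>Xhat Om. Ob i \<in> pf F \<longrightarrow> b i \<lless> f F"
    using psiD[OF assms(1)] by blast
  show ?thesis by (rule is_lub_least[OF lift_val[OF R assms(2)]]) (use c assms(2) wb_le in blast)
qed

lemma sing_psi: "c \<in> D0 \<Longrightarrow> V \<in> Om \<Longrightarrow> (\<And>G. G \<in> Xhat Om \<Longrightarrow> V \<in> pf G \<Longrightarrow> c \<lless> f G) \<Longrightarrow> sing c V \<in> psi f"
  by (rule psiI[OF sing_rep]) auto

lemma Phi_psi: assumes f: "f \<in> CF" shows "Phi (psi f) = f"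
proof
  fix F show "Phi (psi f) F = f F"
  proof (cases "F \<in> Xhat Om")
    case False
    then show ?thesis using CFD(1)[OF f] unfolding Phi_def extensional_def by auto
  next
    case F: True
    have "is_lub {lift h F | h. h \<in> psi f} (f F)"
      unfolding is_lub_iff
    proof (intro conjI allI impI ballI)
      fix s assume "s \<in> {lift h F | h. h \<in> psi f}"
      then show "s \<le> f F" using psi_le F by blast
    next
      fix u assume ub: "\<forall>s\<in>{lift h F | h. h \<in> psi f}. s \<le> u"
      have "a \<le> u" if a: "a \<in> D0" "a \<lless> f F" for a
      proof -
        obtain V where V: "V \<in> pf F" "\<forall>G\<in>Xhat Om. V \<in> pf G \<longrightarrow> f G \<in> {z. a \<lless> z}"
          using cont_nbhd[OF f scott_wb F] a(2) by blast
        have VO: "V \<in> Om" using V(1) unfolding pf_def by auto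
        have "sing a V \<in> psi f" using sing_psi[OF a(1) VO] V(2) by blast
        moreover have "lift (sing a V) F = a" using sing_lift[OF a(1) VO F V(1)] .
        ultimately show "a \<le> u" using ub by force
      qed
      then show "f F \<le> u" using is_lub_least[OF basis_lub[of "f F"]] by blast
    qed
    then show ?thesis unfolding Phi_def using F lub_eq by simp
  qed
qed

lemma nbhd_pt: assumes "x \<in> X" shows "\<exists>F\<in>Xhat Om. pf F = {W\<in>Om. x \<in> W}"
proof -
  have "primef {W\<in>Om. x \<in> W}"
  proof (rule primefI)
    show "{W\<in>Om. x \<in> W} \<subseteq> Om" by auto
    show "X \<in> {W\<in>Om. x \<in> W}" using assms Om_X by auto
    show "{} \<notin> {W\<in>Om. x \<in> W}" by auto
    show "\<And>U V. U \<in> {W\<in>Om. x \<in> W} \<Longrightarrow> V \<in> Om \<Longrightarrow> U \<subseteq> V \<Longrightarrow> V \<in> {W\<in>Om. x \<in> W}" by auto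
    show "\<And>U V. U \<in> {W\<in>Om. x \<in> W} \<Longrightarrow> V \<in> {W\<in>Om. x \<in> W} \<Longrightarrow> U \<inter> V \<in> {W\<in>Om. x \<in> W}" using Om_Int by auto
    show "\<And>U V. U \<in> Om \<Longrightarrow> V \<in> Om \<Longrightarrow> U \<union> V \<in> {W\<in>Om. x \<in> W} \<Longrightarrow> U \<in> {W\<in>Om. x \<in> W} \<or> V \<in> {W\<in>Om. x \<in> W}" by auto
  qed
  then show ?thesis using pt_Xhat pf_pt by blast
qed

lemma psi_cons:
  assumes c: "\<And>j. j \<in> I \<Longrightarrow> Ob j \<in> Om" "\<And>j F. j \<in> I \<Longrightarrow> F \<in> Xhat Om \<Longrightarrow> Ob j \<in> pf F \<Longrightarrow> b j \<lless> f F"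
  shows "consistent_family I b Ob"
  unfolding consistent_family_def
proof (intro allI impI)
  fix J assume J: "J \<subseteq> I" "(\<Inter>j\<in>J. Ob j) \<noteq> {}"
  show "\<exists>u. \<forall>j\<in>J. b j \<le> u"
  proof (cases "J = {}")
    case True then show ?thesis by blast
  next
    case False
    then obtain j0 where "j0 \<in> J" by blast
    obtain x where x: "x \<in> (\<Inter>j\<in>J. Ob j)" using J(2) by blast
    then have "x \<in> X" using \<open>j0 \<in> J\<close> J(1) c(1) Om_sub by blast
    then obtain F where F: "F \<in> Xhat Om" "pf F = {W\<in>Om. x \<in> W}" using nbhd_pt by blast
    have "b j \<le> f F" if "j \<in> J" for j
    proof -
      have "Ob j \<in> pf F" using F(2) x that J(1) c(1) by auto
      then show ?thesis using c(2) that J(1) F(1) wb_le by blast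
    qed
    then show ?thesis by blast
  qed
qed

lemma psi_join:
  assumes h1: "h1 \<in> psi f" and h2: "h2 \<in> psi f"
  shows "\<exists>k\<in>psi f. \<forall>x\<in>X. h1 x \<le> k x \<and> h2 x \<le> k x"
proof -
  obtain I1 b1 O1 where R1: "rep I1 b1 O1 h1" and c1: "\<forall>i\<in>I1. \<forall>F\<in>Xhat Om. O1 i \<in> pf F \<longrightarrow> b1 i \<lless> f F"
    using psiD[OF h1] by blast
  obtain I2 b2 O2 where R2: "rep I2 b2 O2 h2" and c2: "\<forall>i\<in>I2. \<forall>F\<in>Xhat Om. O2 i \<in> pf F \<longrightarrow> b2 i \<lless> f F"
    using psiD[OF h2] by blast
  define I where "I = (\<lambda>i. 2*i) ` I1 \<union> (\<lambda>i. 2*i+1) ` I2"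
  define b where "b = (\<lambda>j::nat. if even j then b1 (j div 2) else b2 (j div 2))"
  define Ob where "Ob = (\<lambda>j::nat. if even j then O1 (j div 2) else O2 (j div 2))"
  have b1e: "b (2*i) = b1 i" "Ob (2*i) = O1 i" for i unfolding b_def Ob_def by auto
  have b2e: "b (2*i+1) = b2 i" "Ob (2*i+1) = O2 i" for i unfolding b_def Ob_def by auto
  have cases: "P j" if "j \<in> I" "\<And>i. i \<in> I1 \<Longrightarrow> P (2*i)" "\<And>i. i \<in> I2 \<Longrightarrow> P (2*i+1)" for j P
    using that unfolding I_def by blast
  have cO: "Ob j \<in> Om" "b j \<in> D0" if "j \<in> I" for j
    using cases[OF that, of "\<lambda>j. Ob j \<in> Om \<and> b j \<in> D0"] b1e b2e repD(3,4)[OF R1] repD(3,4)[OF R2] by auto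
  have cc: "b j \<lless> f F" if "j \<in> I" "F \<in> Xhat Om" "Ob j \<in> pf F" for j F
    using cases[OF that(1), of "\<lambda>j. Ob j \<in> pf F \<longrightarrow> b j \<lless> f F"] b1e b2e c1 c2 that(2,3) by auto
  have fin: "finite I" unfolding I_def using repD(1)[OF R1] repD(1)[OF R2] by auto
  have cons: "consistent_family I b Ob" by (rule psi_cons[of I Ob b f]) (use cO cc in auto)
  define k where "k = step_join X I b Ob"
  have R: "rep I b Ob k" unfolding is_rep_def k_def using fin cons cO by auto
  have kpsi: "k \<in> psi f" by (rule psiI[OF R]) (use cc in auto)
  have "h1 x \<le> k x \<and> h2 x \<le> k x" if x: "x \<in> X" for x
  proof
    show "h1 x \<le> k x"
    proof (rule is_lub_least[OF rep_lub[OF R1 x]])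
      fix s assume "s \<in> {b1 i |i. i \<in> I1 \<and> x \<in> O1 i}"
      then obtain i where i: "i \<in> I1" "x \<in> O1 i" "s = b1 i" by blast
      then have "2*i \<in> I" "x \<in> Ob (2*i)" "s = b (2*i)" unfolding I_def using b1e by auto
      then show "s \<le> k x" using is_lub_upper[OF rep_lub[OF R x]] by blast
    qed
    show "h2 x \<le> k x"
    proof (rule is_lub_least[OF rep_lub[OF R2 x]])
      fix s assume "s \<in> {b2 i |i. i \<in> I2 \<and> x \<in> O2 i}"
      then obtain i where i: "i \<in> I2" "x \<in> O2 i" "s = b2 i" by blast
      then have "2*i+1 \<in> I" "x \<in> Ob (2*i+1)" "s = b (2*i+1)" unfolding I_def using b2e by auto
      then show "s \<le> k x" using is_lub_upper[OF rep_lub[OF R x]] by blast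
    qed
  qed
  then show ?thesis using kpsi by blast
qed

lemma h0_psi: "h0 \<in> psi f"
  by (rule psiI[OF h0_rep]) auto

lemma psi_bound:
  assumes "finite H" "H \<subseteq> psi f"
  shows "\<exists>k\<in>psi f. \<forall>h\<in>H. \<forall>x\<in>X. h x \<le> k x"
  using assms
proof (induction H rule: finite_induct)
  case empty then show ?case using h0_psi by blast
next
  case (insert h H)
  then obtain k where k: "k \<in> psi f" "\<forall>h\<in>H. \<forall>x\<in>X. h x \<le> k x" by blast
  obtain k' where k': "k' \<in> psi f" "\<forall>x\<in>X. h x \<le> k' x \<and> k x \<le> k' x" using psi_join[of h f k] insert k by blast
  have "\<forall>g\<in>insert h H. \<forall>x\<in>X. g x \<le> k' x" using k k' order_trans by blast
  then show ?case using k' by blast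
qed

lemma key:
  assumes f: "f \<in> CF" and W0: "W0 \<in> Om" and a: "\<And>F. F \<in> Xhat Om \<Longrightarrow> W0 \<in> pf F \<Longrightarrow> a \<lless> f F"
  shows "\<exists>k\<in>psi f. \<forall>x\<in>W0. a \<lless> k x"
proof -
  define C where "C = {V\<in>Om. \<exists>c\<in>D0. a \<lless> c \<and> (\<forall>G\<in>Xhat Om. V \<in> pf G \<longrightarrow> c \<lless> f G)}"
  have cov: "\<exists>V\<in>C. V \<in> pf F" if F: "F \<in> Xhat Om" "W0 \<in> pf F" for F
  proof -
    obtain c where c: "c \<in> D0" "a \<lless> c" "c \<lless> f F" using interp[OF a[OF F]] by blast
    obtain V where V: "V \<in> pf F" "\<forall>G\<in>Xhat Om. V \<in> pf G \<longrightarrow> f G \<in> {z. c \<lless> z}"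
      using cont_nbhd[OF f scott_wb F(1)] c(3) by blast
    have "V \<in> Om" using V(1) unfolding pf_def by auto
    then have "V \<in> C" unfolding C_def using c V(2) by blast
    then show ?thesis using V(1) by blast
  qed
  obtain C' where C': "finite C'" "C' \<subseteq> C" "W0 \<subseteq> \<Union>C'"
    using compact[OF W0 _ cov] unfolding C_def by blast
  define cf where "cf = (\<lambda>V. SOME c. c \<in> D0 \<and> a \<lless> c \<and> (\<forall>G\<in>Xhat Om. V \<in> pf G \<longrightarrow> c \<lless> f G))"
  have cfV: "V \<in> Om \<and> cf V \<in> D0 \<and> a \<lless> cf V \<and> (\<forall>G\<in>Xhat Om. V \<in> pf G \<longrightarrow> cf V \<lless> f G)" if "V \<in> C" for V
  proof -
    have hV: "V \<in> Om" and ex: "\<exists>c. c \<in> D0 \<and> a \<lless> c \<and> (\<forall>G\<in>Xhat Om. V \<in> pf G \<longrightarrow> c \<lless> f G)"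
      using that unfolding C_def by auto
    have "cf V \<in> D0 \<and> a \<lless> cf V \<and> (\<forall>G\<in>Xhat Om. V \<in> pf G \<longrightarrow> cf V \<lless> f G)"
      unfolding cf_def by (rule someI_ex[OF ex])
    then show ?thesis using hV by blast
  qed
  define H where "H = (\<lambda>V. sing (cf V) V) ` C'"
  have "H \<subseteq> psi f" unfolding H_def using cfV C'(2) sing_psi by blast
  moreover have "finite H" unfolding H_def using C'(1) by auto
  ultimately obtain k where k: "k \<in> psi f" "\<forall>h\<in>H. \<forall>x\<in>X. h x \<le> k x" using psi_bound by blast
  have "a \<lless> k x" if x: "x \<in> W0" for x
  proof -
    obtain V where V: "V \<in> C'" "x \<in> V" using x C'(3) by blast
    have cV: "V \<in> Om" "cf V \<in> D0" "a \<lless> cf V" using cfV V(1) C'(2) by auto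
    have "x \<in> X" using Om_sub W0 x by blast
    have "sing (cf V) V x = cf V" using sing_val[OF cV(2) cV(1) V(2)] .
    moreover have "sing (cf V) V x \<le> k x" using k(2) V(1) \<open>x \<in> X\<close> unfolding H_def by blast
    ultimately show ?thesis using cV(3) wb_mono[OF order_refl] by metis
  qed
  then show ?thesis using k(1) by blast
qed

lemma psi_prec_bound:
  assumes f: "f \<in> CF" and h: "h \<in> psi f"
  shows "\<exists>H. finite H \<and> H \<subseteq> psi f \<and> (\<forall>k. (\<forall>g\<in>H. \<forall>x\<in>X. g x \<le> k x) \<longrightarrow> prec T Om D0 h k)"
proof -
  obtain I b Ob where R: "rep I b Ob h" and c: "\<forall>i\<in>I. \<forall>F\<in>Xhat Om. Ob i \<in> pf F \<longrightarrow> b i \<lless> f F"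
    using psiD[OF h] by blast
  have "\<exists>k\<in>psi f. \<forall>x\<in>Ob i. b i \<lless> k x" if "i \<in> I" for i
    using key[OF f repD(3)[OF R that]] c that by blast
  then obtain kk where kk: "\<And>i. i \<in> I \<Longrightarrow> kk i \<in> psi f \<and> (\<forall>x\<in>Ob i. b i \<lless> kk i x)" by metis
  have "prec T Om D0 h k" if k: "\<forall>g\<in>kk ` I. \<forall>x\<in>X. g x \<le> k x" for k
  proof (rule precI[OF R])
    fix i x assume ix: "i \<in> I" "x \<in> Ob i"
    then have "x \<in> X" using repD(3)[OF R] Om_sub by blast
    then have "kk i x \<le> k x" using k ix(1) by blast
    then show "b i \<lless> k x" using kk[OF ix(1)] ix(2) wb_mono[OF order_refl] by blast
  qed
  moreover have "finite (kk ` I)" using repD(1)[OF R] by auto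
  moreover have "kk ` I \<subseteq> psi f" using kk by blast
  ultimately show ?thesis by blast
qed

lemma psi_in: assumes f: "f \<in> CF" shows "psi f \<in> RIC"
proof (rule RICI)
  show "psi f \<subseteq> Babs T Om D0" unfolding psi_def by auto
  show "psi f \<noteq> {}" using h0_psi by blast
  show "\<And>h h'. h \<in> psi f \<Longrightarrow> h' \<in> Babs T Om D0 \<Longrightarrow> prec T Om D0 h' h \<Longrightarrow> h' \<in> psi f"
  proof -
    fix h h' assume hh: "h \<in> psi f" "h' \<in> Babs T Om D0" "prec T Om D0 h' h"
    have hB: "h \<in> Babs T Om D0" using hh(1) unfolding psi_def by auto
    obtain I b Ob where R: "rep I b Ob h'" and c: "\<forall>i\<in>I. \<forall>F\<in>Xhat Om. Ob i \<in> pf F \<longrightarrow> b i \<lless> lift h F"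
      using prec_lift[OF hh(3) hB] by blast
    show "h' \<in> psi f"
    proof (rule psiI[OF R])
      fix i F assume "i \<in> I" "F \<in> Xhat Om" "Ob i \<in> pf F"
      then show "b i \<lless> f F" using c psi_le[OF hh(1)] wb_mono[OF order_refl] by blast
    qed
  qed
  fix h1 h2 assume h: "h1 \<in> psi f" "h2 \<in> psi f"
  obtain H1 where H1: "finite H1" "H1 \<subseteq> psi f" "\<forall>k. (\<forall>g\<in>H1. \<forall>x\<in>X. g x \<le> k x) \<longrightarrow> prec T Om D0 h1 k"
    using psi_prec_bound[OF f h(1)] by blast
  obtain H2 where H2: "finite H2" "H2 \<subseteq> psi f" "\<forall>k. (\<forall>g\<in>H2. \<forall>x\<in>X. g x \<le> k x) \<longrightarrow> prec T Om D0 h2 k"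
    using psi_prec_bound[OF f h(2)] by blast
  obtain k where k: "k \<in> psi f" "\<forall>g\<in>H1 \<union> H2. \<forall>x\<in>X. g x \<le> k x"
    using psi_bound[of "H1 \<union> H2" f] H1 H2 by auto
  then show "\<exists>h\<in>psi f. prec T Om D0 h1 h \<and> prec T Om D0 h2 h" using H1(3) H2(3) by blast
qed

lemma R_bound:
  assumes R: "R \<in> RIC" and "finite G" "G \<subseteq> R"
  shows "\<exists>g\<in>R. \<forall>g'\<in>G. \<forall>x\<in>X. g' x \<le> g x"
  using assms(2,3)
proof (induction G rule: finite_induct)
  case empty then show ?case using RICD(2)[OF R] by blast
next
  case (insert h G)
  then obtain g where g: "g \<in> R" "\<forall>g'\<in>G. \<forall>x\<in>X. g' x \<le> g x" by blast
  obtain g3 where g3: "g3 \<in> R" "prec T Om D0 h g3" "prec T Om D0 g g3" using RICD(4)[OF R, of h g] insert g by blast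
  have "\<forall>g'\<in>insert h G. \<forall>x\<in>X. g' x \<le> g3 x"
    using g(2) prec_le[OF g3(2)] prec_le[OF g3(3)] order_trans by blast
  then show ?case using g3(1) by blast
qed

lemma psi_Phi: assumes R: "R \<in> RIC" shows "psi (Phi R) = R"
proof
  show "R \<subseteq> psi (Phi R)"
  proof
    fix h assume h: "h \<in> R"
    obtain g where g: "g \<in> R" "prec T Om D0 h g" using RICD(4)[OF R h h] by blast
    have gB: "g \<in> Babs T Om D0" using g(1) RICD(1)[OF R] by blast
    obtain I b Ob where Rp: "rep I b Ob h" and c: "\<forall>i\<in>I. \<forall>F\<in>Xhat Om. Ob i \<in> pf F \<longrightarrow> b i \<lless> lift g F"
      using prec_lift[OF g(2) gB] by blast
    show "h \<in> psi (Phi R)"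
    proof (rule psiI[OF Rp])
      fix i F assume iF: "i \<in> I" "F \<in> Xhat Om" "Ob i \<in> pf F"
      have "lift g F \<le> Phi R F" using is_lub_upper[OF Phi_lub[OF R iF(2)]] g(1) by blast
      then show "b i \<lless> Phi R F" using c iF wb_mono[OF order_refl] by blast
    qed
  qed
  show "psi (Phi R) \<subseteq> R"
  proof
    fix h assume h: "h \<in> psi (Phi R)"
    have hB: "h \<in> Babs T Om D0" using h unfolding psi_def by auto
    obtain I b Ob where Rp: "rep I b Ob h" and c: "\<forall>i\<in>I. \<forall>F\<in>Xhat Om. Ob i \<in> pf F \<longrightarrow> b i \<lless> Phi R F"
      using psiD[OF h] by blast
    have claim: "\<exists>g\<in>R. \<forall>x\<in>Ob i. b i \<lless> g x" if i: "i \<in> I" for i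
    proof -
      define C where "C = {V\<in>Om. \<exists>g\<in>R. \<forall>x\<in>V. b i \<lless> g x}"
      have cov: "\<exists>V\<in>C. V \<in> pf F" if F: "F \<in> Xhat Om" "Ob i \<in> pf F" for F
      proof -
        have "b i \<lless> Phi R F" using c i F by blast
        then obtain c' where c': "b i \<lless> c'" "c' \<lless> Phi R F" using interp by blast
        obtain s where "s \<in> {lift g F | g. g \<in> R}" "c' \<le> s" using wb_dir[OF c'(2) dirR[OF R F(1)] Phi_lub[OF R F(1)]] by blast
        then obtain g where g: "g \<in> R" "c' \<le> lift g F" by blast
        have bg: "b i \<lless> lift g F" using wb_mono[OF order_refl c'(1) g(2)] .
        obtain I2 b2 O2 where R2: "rep I2 b2 O2 g" using Babs_rep g(1) RICD(1)[OF R] by blast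
        obtain V where V: "V \<in> pf F" "\<forall>x\<in>V. lift g F \<le> g x" using lift_nbhd[OF R2 F(1)] by blast
        have "V \<in> Om" using V(1) unfolding pf_def by auto
        moreover have "\<forall>x\<in>V. b i \<lless> g x" using V(2) bg wb_mono[OF order_refl] by blast
        ultimately have "V \<in> C" unfolding C_def using g(1) by blast
        then show ?thesis using V(1) by blast
      qed
      obtain C' where C': "finite C'" "C' \<subseteq> C" "Ob i \<subseteq> \<Union>C'"
        using compact[OF repD(3)[OF Rp i] _ cov] unfolding C_def by blast
      have "\<exists>g. g \<in> R \<and> (\<forall>x\<in>V. b i \<lless> g x)" if "V \<in> C'" for V using that C'(2) unfolding C_def by blast
      then obtain gg where gg: "\<And>V. V \<in> C' \<Longrightarrow> gg V \<in> R \<and> (\<forall>x\<in>V. b i \<lless> gg V x)" by metis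
      obtain g where g: "g \<in> R" "\<forall>g'\<in>gg ` C'. \<forall>x\<in>X. g' x \<le> g x"
        using R_bound[OF R, of "gg ` C'"] C'(1) gg by blast
      have "b i \<lless> g x" if x: "x \<in> Ob i" for x
      proof -
        obtain V where V: "V \<in> C'" "x \<in> V" using x C'(3) by blast
        have "x \<in> X" using x repD(3)[OF Rp i] Om_sub by blast
        then have "gg V x \<le> g x" using g(2) V(1) by blast
        then show ?thesis using gg[OF V(1)] V(2) wb_mono[OF order_refl] by blast
      qed
      then show ?thesis using g(1) by blast
    qed
    then obtain gi where gi: "\<And>i. i \<in> I \<Longrightarrow> gi i \<in> R \<and> (\<forall>x\<in>Ob i. b i \<lless> gi i x)" by metis
    obtain g where g: "g \<in> R" "\<forall>g'\<in>gi ` I. \<forall>x\<in>X. g' x \<le> g x"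
      using R_bound[OF R, of "gi ` I"] repD(1)[OF Rp] gi by blast
    have "prec T Om D0 h g"
    proof (rule precI[OF Rp])
      fix i x assume ix: "i \<in> I" "x \<in> Ob i"
      then have "x \<in> X" using repD(3)[OF Rp] Om_sub by blast
      then have "gi i x \<le> g x" using g(2) ix(1) by blast
      then show "b i \<lless> g x" using gi[OF ix(1)] ix(2) wb_mono[OF order_refl] by blast
    qed
    then show "h \<in> R" using RICD(3)[OF R g(1) hB] by blast
  qed
qed

lemma main_iso:
  "\<exists>\<phi>. bij_betw \<phi> RIC CF \<and> (\<forall>R1\<in>RIC. \<forall>R2\<in>RIC. R1 \<subseteq> R2 \<longleftrightarrow> fun_le (Xhat Om) (\<phi> R1) (\<phi> R2))"
proof (intro exI conjI)
  show "bij_betw Phi RIC CF"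
    unfolding bij_betw_def
  proof
    show "inj_on Phi RIC"
      by (rule inj_onI) (metis psi_Phi)
    show "Phi ` RIC = CF"
    proof
      show "Phi ` RIC \<subseteq> CF" using Phi_in by blast
      show "CF \<subseteq> Phi ` RIC"
      proof
        fix f assume "f \<in> CF"
        then show "f \<in> Phi ` RIC" using Phi_psi psi_in by (metis image_eqI)
      qed
    qed
  qed
  show "\<forall>R1\<in>RIC. \<forall>R2\<in>RIC. R1 \<subseteq> R2 \<longleftrightarrow> fun_le (Xhat Om) (Phi R1) (Phi R2)"
  proof (intro ballI iffI)
    fix R1 R2 assume R: "R1 \<in> RIC" "R2 \<in> RIC" "R1 \<subseteq> R2"
    show "fun_le (Xhat Om) (Phi R1) (Phi R2)"
      unfolding fun_le_def
    proof
      fix F assume F: "F \<in> Xhat Om"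
      show "Phi R1 F \<le> Phi R2 F" by (rule lub_mono[OF Phi_lub[OF R(1) F] Phi_lub[OF R(2) F]]) (use R(3) in blast)
    qed
  next
    fix R1 R2 assume R: "R1 \<in> RIC" "R2 \<in> RIC" and le: "fun_le (Xhat Om) (Phi R1) (Phi R2)"
    have "psi (Phi R1) \<subseteq> psi (Phi R2)"
    proof
      fix h assume h: "h \<in> psi (Phi R1)"
      obtain I b Ob where Rp: "rep I b Ob h" and c: "\<forall>i\<in>I. \<forall>F\<in>Xhat Om. Ob i \<in> pf F \<longrightarrow> b i \<lless> Phi R1 F"
        using psiD[OF h] by blast
      show "h \<in> psi (Phi R2)"
      proof (rule psiI[OF Rp])
        fix i F assume "i \<in> I" "F \<in> Xhat Om" "Ob i \<in> pf F"
        then show "b i \<lless> Phi R2 F" using c le wb_mono[OF order_refl] unfolding fun_le_def by blast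
      qed
    qed
    then show "R1 \<subseteq> R2" using psi_Phi R by simp
  qed
qed

end

theorem mainTheorem19:
  fixes T :: "'a topology" and \<Omega>0 :: "'a set set" and D0 :: "'b::order set"
  assumes "viable_base T \<Omega>0"
    and "bc_domain TYPE('b)"
    and "is_basis D0"
  shows "\<exists>\<phi>. bij_betw \<phi> (rounded_ideal_completion T \<Omega>0 D0) (cont_fun_space \<Omega>0 :: ('a set set set \<Rightarrow> 'b) set)
           \<and> (\<forall>R1\<in>rounded_ideal_completion T \<Omega>0 D0. \<forall>R2\<in>rounded_ideal_completion T \<Omega>0 D0.
                R1 \<subseteq> R2 \<longleftrightarrow> fun_le (Xhat \<Omega>0) (\<phi> R1) (\<phi> R2))"
  proof -
  interpret S: setting D0 T \<Omega>0
    by unfold_locales (use assms in auto)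
  show ?thesis using S.main_iso by simp
qed

end
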